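(* Let $F$ be a continuous distribution function with a density that is symmetric about $\theta$ and unimodal. Fix $0 < \alpha < 1$ and $0 \le \varepsilon < 1/2$, and for each $n$ let $k_n = \arg\min_k |\alpha^*(n,k,\varepsilon) - \alpha|$. Consider the sequence of intervals $I_n = [x_{(k_n+1)}, x_{(n-k_n)}]$ built from samples $X_n = (x_1,\dots,x_n)$. Then: 1. For $0 \le \delta < (1-\varepsilon)/2$, $$L\{I_n,F,\delta\} = F^{-1}\Big\{\frac{1+\varepsilon}{2(1-\delta)}\Big\} - F^{-1}\Big\{\frac{1-\varepsilon}{2(1-\delta)}\Big\}.$$ 2. The length breakdown point is $\delta^*\{I_n,F\} = (1-\varepsilon)/2$. 3. The sequence $I_n$ has $\varepsilon$-robust length at $F$ if and only if $\varepsilon < 1/3$. 4. Let $[A_n(X_n), B_n(X_n)]$, $n \ge 1$, be any sequence of confidence intervals such that for every $n$ and every distribution $G_0$ satisfying (A1), $$\inf_{G \in \mathcal{F}_\varepsilon(G_0)} P_G\{A_n(X_n) \le G_0^{-1}(1/2) < B_n(X_n)\} = 1 - \alpha,$$ where $X_n$ is an i.i.d. sample of size $n$ from $G$. Suppose that, when the sample comes from $F$, $A_n(X_n) \to A_0$ and $B_n(X_n) \to B_0$ almost surely for constants $A_0, B_0$. Then $B_0 \ge F^{-1}((1+\varepsilon)/2)$ and $A_0 \le F^{-1}((1-\varepsilon)/2)$.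
   Context: Assumption (A1): a distribution function is continuous with a unique median. For a distribution function $F$, $F^{-1}(p) = \inf\{x : F(x) \ge p\}$. For $0 \le \varepsilon < 1/2$, the contamination neighborhood is $\mathcal{F}_\varepsilon(F) = \{G : G = (1-\varepsilon)F + \varepsilon H,\ H \text{ an arbitrary distribution on } \mathbb{R}\}$. For integers $n \ge 1$, $k \ge 0$, $\alpha^*(n,k,\varepsilon) = 1 - P(k < Z_n < n-k)$ with $Z_n \sim \mathrm{Binomial}(n,(1-\varepsilon)/2)$. For a sequence of intervals $I_n = [a_n(X_n), b_n(X_n)]$ and $\delta \in [0,1/2)$, the maximum asymptotic length under contamination of size $\delta$ at $F$ is $$L\{I_n,F,\delta\} = \sup_{G \in \mathcal{F}_\delta(F)} \operatorname{ess\,sup} \limsup_{n\to\infty} \big(b_n(X_n) - a_n(X_n)\big),$$ where under $G$ the $X_n = (x_1,\dots,x_n)$ are the first $n$ elements of an i.i.d. sequence with distribution $G$ and the essential supremum is with respect to that law. The sequence $I_n$ has $\delta$-robust length at $F$ if $L\{I_n,F,\delta\} < \infty$, and its length breakdown point at $F$ is $\delta^*\{I_n,F\} = \sup\{\delta : L\{I_n,F,\delta\} < \infty\}$. *)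

theory Defs
  imports "HOL-Probability.Probability"
begin

definition quantile :: "(real \<Rightarrow> real) \<Rightarrow> real \<Rightarrow> real" where
  "quantile F p = Inf {x. F x \<ge> p}"

definition A1 :: "real measure \<Rightarrow> bool" where
  "A1 G \<longleftrightarrow> real_distribution G \<and> (\<forall>x. isCont (cdf G) x) \<and> (\<exists>!m. cdf G m = 1/2)"

definition contam :: "real measure \<Rightarrow> real \<Rightarrow> real measure set" where
  "contam F eps = {G. real_distribution G \<and>
      (\<exists>H. real_distribution H \<and> (\<forall>x. cdf G x = (1 - eps) * cdf F x + eps * cdf H x))}"

definition iid :: "real measure \<Rightarrow> (nat \<Rightarrow> real) measure" where
  "iid G = (\<Pi>\<^sub>M i\<in>(UNIV::nat set). G)"

definition sample :: "(nat \<Rightarrow> real) \<Rightarrow> nat \<Rightarrow> real list" where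
  "sample \<omega> n = map \<omega> [0..<n]"

text \<open>j-th order statistic (1-indexed) x_(j) of a sample.\<close>
definition ostat :: "real list \<Rightarrow> nat \<Rightarrow> real" where
  "ostat xs j = sort xs ! (j - 1)"

definition alpha_star :: "nat \<Rightarrow> nat \<Rightarrow> real \<Rightarrow> real" where
  "alpha_star n k eps =
     1 - measure_pmf.prob (binomial_pmf n ((1 - eps)/2)) {z. k < z \<and> z < n - k}"

definition max_asym_length ::
  "(nat \<Rightarrow> real list \<Rightarrow> real) \<Rightarrow> (nat \<Rightarrow> real list \<Rightarrow> real) \<Rightarrow> real measure \<Rightarrow> real \<Rightarrow> ereal" where
  "max_asym_length a b F \<delta> =
     (SUP G\<in>contam F \<delta>. esssup (iid G)
         (\<lambda>\<omega>. limsup (\<lambda>n. ereal (b n (sample \<omega> n) - a n (sample \<omega> n)))))"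

definition robust_length ::
  "(nat \<Rightarrow> real list \<Rightarrow> real) \<Rightarrow> (nat \<Rightarrow> real list \<Rightarrow> real) \<Rightarrow> real measure \<Rightarrow> real \<Rightarrow> bool" where
  "robust_length a b F \<delta> \<longleftrightarrow> max_asym_length a b F \<delta> < \<infinity>"

definition length_breakdown ::
  "(nat \<Rightarrow> real list \<Rightarrow> real) \<Rightarrow> (nat \<Rightarrow> real list \<Rightarrow> real) \<Rightarrow> real measure \<Rightarrow> real" where
  "length_breakdown a b F = Sup {\<delta>. 0 \<le> \<delta> \<and> \<delta> < 1/2 \<and> robust_length a b F \<delta>}"

end

theory Submission
  imports Defs
begin

lemma sorted_nth_le_iff:
  fixes s :: "real list"
  assumes "sorted s" "i < length s"
  shows "s ! i \<le> t \<longleftrightarrow> i < length (filter (\<lambda>x. x \<le> t) s)"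
  using assms
proof (induction s arbitrary: i)
  case Nil then show ?case by simp
next
  case (Cons x s)
  show ?case
  proof (cases "x \<le> t")
    case True
    then show ?thesis using Cons by (cases i) auto
  next
    case False
    have "filter (\<lambda>x. x \<le> t) s = []" using Cons.prems False
      by (auto simp: filter_empty_conv)
    moreover have "(x # s) ! i \<ge> x" using Cons.prems
      by (cases i) (auto simp: nth_mem)
    ultimately show ?thesis using False by auto
  qed
qed

lemma ostat_le_iff:
  assumes "1 \<le> j" "j \<le> length xs"
  shows "ostat xs j \<le> t \<longleftrightarrow> j \<le> length (filter (\<lambda>x. x \<le> t) xs)"
proof -
  have "ostat xs j \<le> t \<longleftrightarrow> j - 1 < length (filter (\<lambda>x. x \<le> t) (sort xs))"
    unfolding ostat_def using assms by (intro sorted_nth_le_iff) auto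
  also have "length (filter (\<lambda>x. x \<le> t) (sort xs)) = length (filter (\<lambda>x. x \<le> t) xs)"
    by (metis filter_sort length_sort)
  finally show ?thesis using assms by auto
qed

lemma len_filter_sample:
  "length (filter P (sample \<omega> n)) = card {i\<in>{..<n}. P (\<omega> i)}"
  unfolding sample_def length_filter_conv_card by (auto intro!: arg_cong[where f=card])

lemma ostat_le_iff_card:
  assumes "1 \<le> j" "j \<le> n"
  shows "ostat (sample \<omega> n) j \<le> t \<longleftrightarrow> j \<le> card {i\<in>{..<n}. \<omega> i \<le> t}"
  using ostat_le_iff[of j "sample \<omega> n" t] assms
  by (simp add: len_filter_sample, simp add: sample_def)

lemma ostat_out_of_range:
  assumes "\<not> j - 1 < n"
  shows "ostat (sample \<omega> n) j = ([]::real list) ! (j - 1 - n)"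
proof -
  have "sort (sample \<omega> n) = sort (sample \<omega> n) @ []" by simp
  then have "sort (sample \<omega> n) ! (j-1) = (sort (sample \<omega> n) @ []) ! (j-1)" by simp
  also have "\<dots> = [] ! (j - 1 - n)" using assms by (subst nth_append) (simp add: sample_def)
  finally show ?thesis by (simp add: ostat_def)
qed

lemma ostat_zero: "ostat xs 0 = ostat xs 1"
  by (simp add: ostat_def)

lemma card_le_meas:
  "(\<lambda>\<omega>::nat\<Rightarrow>real. real (card {i\<in>{..<n}. \<omega> i \<in> A})) \<in> borel_measurable (PiM UNIV (\<lambda>_. borel))"
  if "A \<in> sets borel"
proof -
  have "(\<lambda>\<omega>::nat\<Rightarrow>real. real (card {i\<in>{..<n}. \<omega> i \<in> A})) = (\<lambda>\<omega>. \<Sum>i<n. indicator A (\<omega> i) :: real)"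
    by (auto simp: indicator_def sum.If_cases Int_def)
  moreover have "(\<lambda>\<omega>::nat\<Rightarrow>real. \<Sum>i<n. indicator A (\<omega> i) :: real) \<in> borel_measurable (PiM UNIV (\<lambda>_. borel))"
    using that by measurable
  ultimately show ?thesis by simp
qed

lemma ostat_meas:
  "(\<lambda>\<omega>. ostat (sample \<omega> n) j) \<in> borel_measurable (PiM UNIV (\<lambda>_. borel))"
proof (cases "j - 1 < n")
  case False
  then show ?thesis by (simp add: ostat_out_of_range)
next
  case True
  define j' where "j' = j - 1 + 1"
  have eq: "ostat (sample \<omega> n) j = ostat (sample \<omega> n) j'" for \<omega>
    unfolding j'_def by (cases j) (auto simp: ostat_def)
  have j': "1 \<le> j'" "j' \<le> n" using True by (auto simp: j'_def)
  show ?thesis unfolding eq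
  proof (subst borel_measurable_iff_le, intro allI)
    fix t
    have "{\<omega> \<in> space (PiM UNIV (\<lambda>_. borel)). ostat (sample \<omega> n) j' \<le> t}
        = (\<lambda>\<omega>::nat\<Rightarrow>real. real (card {i\<in>{..<n}. \<omega> i \<in> {..t}})) -` {real j'..} \<inter> space (PiM UNIV (\<lambda>_. borel))"
      using j' by (auto simp: ostat_le_iff_card)
    also have "\<dots> \<in> sets (PiM UNIV (\<lambda>_. borel))"
      by (rule measurable_sets[OF card_le_meas]) auto
    finally show "{\<omega> \<in> space (PiM UNIV (\<lambda>_. borel)). ostat (sample \<omega> n) j' \<le> t} \<in> sets (PiM UNIV (\<lambda>_. borel))" .
  qed
qed

lemma choose_ratio: "(n choose Suc l) * Suc l = (n choose l) * (n - l)"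
proof (cases n)
  case 0 then show ?thesis by simp
next
  case (Suc m)
  have "Suc l * (Suc m choose Suc l) = Suc m * (m choose l)" by (rule Suc_times_binomial)
  moreover have "(Suc m - l) * (Suc m choose l) = Suc m * ((Suc m - 1) choose l)" by (rule binomial_absorb_comp)
  ultimately show ?thesis using Suc by (simp add: mult.commute)
qed

lemma gen: "(c1::real) * s1 = c0 * d \<Longrightarrow> c1 * (p * pl) * r1 * (s1 * q) = c0 * pl * (r1 * q) * (d * p)"
proof -
  assume h: "c1 * s1 = c0 * d"
  have "c1 * (p * pl) * r1 * (s1 * q) = (c1 * s1) * (p * pl * r1 * q)" by (simp add: algebra_simps)
  also have "\<dots> = (c0 * d) * (p * pl * r1 * q)" by (simp add: h)
  finally show ?thesis by (simp add: algebra_simps)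
qed

lemma pmf_bin_ratio:
  fixes p :: real
  assumes p: "0 < p" "p < 1" and l: "l < n"
  shows "pmf (binomial_pmf n p) (Suc l) * (real (Suc l) * (1 - p)) = pmf (binomial_pmf n p) l * (real (n - l) * p)"
proof -
  have "real (n choose Suc l) * real (Suc l) = real (n choose l) * real (n - l)"
    using choose_ratio[of n l] by (metis of_nat_mult)
  moreover have "(1 - p) ^ (n - l) = (1 - p) ^ (n - Suc l) * (1 - p)"
    using l by (metis Suc_diff_Suc power_Suc2)
  ultimately show ?thesis
    using gen[of "real (n choose Suc l)" "real (Suc l)" "real (n choose l)" "real (n - l)" p "p ^ l" "(1-p)^(n - Suc l)" "1 - p"]
    using p by (simp add: mult.assoc)
qed

lemma divmul_aux: "(c::real) \<noteq> 0 \<Longrightarrow> q \<noteq> 0 \<Longrightarrow> a / (c*q) * (b*q) = a*b/c"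
  by (simp add: field_simps)

lemma pmf_bin_small_aux:
  fixes p :: real and L n j :: nat
  assumes p: "0 < p" "p < 1" and L: "L \<ge> 1"
    and hn: "real n * p * (1 - p) \<ge> 2 * real L * (real L + 1)"
    and hj: "real j \<le> real n * p"
  shows "pmf (binomial_pmf n p) j \<le> 2 / real L"
proof -
  define q where "q = 1 - p"
  have q: "0 < q" "q < 1" "p + q = 1" using p by (auto simp: q_def)
  have LL: "2 * real L * (real L + 1) > 0" using L by simp
  have npq: "real n * p * q > 0" using hn LL by (simp add: q_def)
  define m where "m = real n * p + real L"
  have "real n * q \<ge> 2 * real L * (real L + 1)"
  proof -
    have "real n * p \<le> real n" using p by (simp add: mult_left_le)
    then have "real n * p * q \<le> real n * q" using q by (intro mult_right_mono) auto
    then show ?thesis using hn by (simp add: q_def)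
  qed
  moreover have "2 * real L * (real L + 1) \<ge> real L + 1"
  proof -
    have "(real L + 1) * 1 \<le> (real L + 1) * (2 * real L)" using L by (intro mult_left_mono) auto
    then show ?thesis by (simp add: algebra_simps)
  qed
  ultimately have nq: "real n * q \<ge> real L + 1" by linarith
  have m_le: "m + 1 \<le> real n" using nq q by (simp add: m_def q_def algebra_simps)
  define \<rho> where "\<rho> = (real n - m) * p / ((m + 1) * q)"
  have np0: "real n * p \<ge> 0" using p by simp
  have mpos: "m + 1 > 0" using np0 by (simp add: m_def)
  have rho_nn: "\<rho> \<ge> 0" using m_le p q mpos by (simp add: \<rho>_def)
  have one_minus: "1 - \<rho> = (real L + q) / ((m + 1) * q)"
  proof -
    have e: "(m+1)*q - (real n - m)*p = real L + q" by (simp add: m_def q_def algebra_simps)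
    have "1 - \<rho> = ((m+1)*q - (real n - m)*p) / ((m + 1) * q)"
    proof -
      have d: "(m + 1) * q \<noteq> 0" using mpos q by simp
      show ?thesis unfolding diff_divide_distrib using d by (simp add: \<rho>_def)
    qed
    then show ?thesis using e by simp
  qed
  have rho_le: "\<rho> \<le> 1" using one_minus q mpos
    by (smt (verit) divide_nonneg_pos mult_pos_pos of_nat_0_le_iff)
  have step: "pmf (binomial_pmf n p) (j + i) \<ge> \<rho> ^ i * pmf (binomial_pmf n p) j" if "i \<le> L" for i
    using that
  proof (induction i)
    case 0 then show ?case by simp
  next
    case (Suc i)
    define l where "l = j + i"
    have l_le: "real l + 1 \<le> m" using hj Suc.prems by (simp add: l_def m_def)
    then have ln: "l < n" using m_le by linarith
    have ratio: "pmf (binomial_pmf n p) (Suc l) * (real (Suc l) * q) = pmf (binomial_pmf n p) l * (real (n - l) * p)"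
      using pmf_bin_ratio[OF p ln] by (simp add: q_def)
    have "(real n - real l) * (m + 1) - (real n - m) * (real l + 1) = (real n + 1) * (m - real l)"
      by (simp add: algebra_simps)
    also have "\<dots> \<ge> 0" using l_le by simp
    finally have cmp: "(real n - m) * (real l + 1) \<le> (real n - real l) * (m + 1)" by simp
    have "\<rho> * (real (Suc l) * q) = (real n - m) * (real l + 1) * p / (m + 1)"
    proof -
      have "m + 1 \<noteq> 0" "q \<noteq> 0" using q mpos by auto
      then show ?thesis unfolding \<rho>_def using divmul_aux[of "m+1" q "(real n - m) * p" "real (Suc l)"]
        by (simp add: algebra_simps)
    qed
    also have "\<dots> \<le> (real n - real l) * (m + 1) * p / (m + 1)"
      using cmp p mpos by (intro divide_right_mono mult_right_mono) auto
    also have "\<dots> = real (n - l) * p" using mpos ln by (simp add: of_nat_diff)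
    finally have rr: "\<rho> * (real (Suc l) * q) \<le> real (n - l) * p" .
    have pl: "pmf (binomial_pmf n p) l \<ge> 0" by simp
    have "\<rho> * pmf (binomial_pmf n p) l * (real (Suc l) * q) \<le> pmf (binomial_pmf n p) l * (real (n - l) * p)"
      using mult_left_mono[OF rr pl] by (simp add: algebra_simps)
    also have "\<dots> = pmf (binomial_pmf n p) (Suc l) * (real (Suc l) * q)" using ratio by simp
    finally have "\<rho> * pmf (binomial_pmf n p) l \<le> pmf (binomial_pmf n p) (Suc l)"
      using q by (simp add: mult_le_cancel_right)
    moreover have "\<rho> ^ i * pmf (binomial_pmf n p) j \<le> pmf (binomial_pmf n p) l"
      using Suc by (simp add: l_def)
    ultimately have "\<rho> * (\<rho> ^ i * pmf (binomial_pmf n p) j) \<le> pmf (binomial_pmf n p) (Suc l)"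
      using rho_nn by (meson mult_left_mono order_trans)
    then show ?case by (simp add: l_def)
  qed
  have lower: "\<rho> ^ L * pmf (binomial_pmf n p) j \<le> pmf (binomial_pmf n p) (j + i)" if "i < L" for i
  proof -
    have "\<rho> ^ L \<le> \<rho> ^ i" using rho_nn rho_le that by (intro power_decreasing) auto
    then have "\<rho> ^ L * pmf (binomial_pmf n p) j \<le> \<rho> ^ i * pmf (binomial_pmf n p) j"
      by (intro mult_right_mono) auto
    also have "\<dots> \<le> pmf (binomial_pmf n p) (j + i)" using step that by simp
    finally show ?thesis .
  qed
  have "(\<Sum>i<L. pmf (binomial_pmf n p) (j + i)) = sum (pmf (binomial_pmf n p)) {j..<j+L}"
  proof -
    have "sum (pmf (binomial_pmf n p)) {0 + j..<L + j} = (\<Sum>i=0..<L. pmf (binomial_pmf n p) (i + j))"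
      by (rule sum.shift_bounds_nat_ivl)
    then show ?thesis by (simp add: atLeast0LessThan add.commute)
  qed
  also have "\<dots> = measure_pmf.prob (binomial_pmf n p) {j..<j+L}"
    by (simp add: measure_measure_pmf_finite)
  also have "\<dots> \<le> 1" by simp
  finally have sum1: "(\<Sum>i<L. pmf (binomial_pmf n p) (j + i)) \<le> 1" .
  have "real L * (\<rho> ^ L * pmf (binomial_pmf n p) j) = (\<Sum>i<L. \<rho> ^ L * pmf (binomial_pmf n p) j)"
    by simp
  also have "\<dots> \<le> (\<Sum>i<L. pmf (binomial_pmf n p) (j + i))"
    by (intro sum_mono lower) auto
  finally have A: "real L * (\<rho> ^ L * pmf (binomial_pmf n p) j) \<le> 1" using sum1 by linarith
  have "1 + real L * (\<rho> - 1) \<le> (1 + (\<rho> - 1)) ^ L"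
    by (rule Bernoulli_inequality) (use rho_nn in simp)
  then have B: "1 - real L * (1 - \<rho>) \<le> \<rho> ^ L" by (simp add: algebra_simps)
  have "real L * (1 - \<rho>) = real L * (real L + q) / ((m + 1) * q)" by (simp add: one_minus)
  also have "\<dots> \<le> real L * (real L + 1) / ((real n * p) * q)"
  proof (rule frac_le)
    show "0 \<le> real L * (real L + 1)" by simp
    show "real L * (real L + q) \<le> real L * (real L + 1)" using q by (intro mult_left_mono) auto
    show "0 < real n * p * q" by (rule npq)
    show "real n * p * q \<le> (m + 1) * q" using q by (intro mult_right_mono) (auto simp: m_def)
  qed
  also have "\<dots> \<le> 1 / 2"
  proof -
    have pos: "0 < real n * p * q" by (rule npq)
    show ?thesis using hn pos by (simp add: q_def divide_simps)
  qed
  finally have "\<rho> ^ L \<ge> 1 / 2" using B by linarith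
  then have "real L * (1/2 * pmf (binomial_pmf n p) j) \<le> 1" using A
    by (smt (verit, best) mult_left_mono mult_right_mono of_nat_0_le_iff pmf_nonneg)
  then show ?thesis using L by (simp add: field_simps)
qed


lemma pmf_bin_sym:
  fixes p :: real
  assumes p: "0 < p" "p < 1" and j: "j \<le> n"
  shows "pmf (binomial_pmf n p) j = pmf (binomial_pmf n (1 - p)) (n - j)"
  using p j by (simp add: binomial_symmetric[OF j] mult.commute mult.left_commute)

lemma pmf_bin_small:
  fixes p \<eta> :: real
  assumes p: "0 < p" "p < 1" and eta: "\<eta> > 0"
  shows "\<exists>N. \<forall>n\<ge>N. \<forall>j. pmf (binomial_pmf n p) j \<le> \<eta>"
proof -
  define L :: nat where "L = nat \<lceil>2 / \<eta>\<rceil> + 1"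
  have L1: "L \<ge> 1" by (simp add: L_def)
  have "2 / \<eta> < real L" unfolding L_def by linarith
  then have Lsmall: "2 / real L < \<eta>" using eta L1
    by (simp add: divide_less_eq mult.commute pos_divide_less_eq)
  define N :: nat where "N = nat \<lceil>2 * real L * (real L + 1) / (p * (1 - p))\<rceil>"
  have pq: "p * (1 - p) > 0" using p by simp
  show ?thesis
  proof (intro exI allI impI)
    fix n j assume n: "n \<ge> N"
    have "2 * real L * (real L + 1) / (p * (1 - p)) \<le> real n"
      using n unfolding N_def by linarith
    then have hn: "real n * p * (1 - p) \<ge> 2 * real L * (real L + 1)"
      using pq by (simp add: divide_le_eq mult.assoc)
    show "pmf (binomial_pmf n p) j \<le> \<eta>"
    proof (cases "real j \<le> real n * p")
      case True
      then show ?thesis using pmf_bin_small_aux[OF p L1 hn True] Lsmall by linarith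
    next
      case False
      show ?thesis
      proof (cases "j \<le> n")
        case False
        then have "pmf (binomial_pmf n p) j = 0" using p by (simp add: binomial_eq_0)
        then show ?thesis using eta by simp
      next
        case True
        have p': "0 < 1 - p" "1 - p < 1" using p by auto
        have hn': "real n * (1 - p) * (1 - (1 - p)) \<ge> 2 * real L * (real L + 1)"
          using hn by (simp add: algebra_simps)
        have "real (n - j) \<le> real n * (1 - p)" using False True by (simp add: of_nat_diff algebra_simps)
        then have "pmf (binomial_pmf n (1 - p)) (n - j) \<le> 2 / real L"
          by (rule pmf_bin_small_aux[OF p' L1 hn'])
        then show ?thesis using pmf_bin_sym[OF p True] Lsmall by linarith
      qed
    qed
  qed
qed

lemma bin_tail:
  fixes p c :: real
  assumes p: "0 \<le> p" "p \<le> 1" and c: "c > 0"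
  shows "(\<lambda>n. measure_pmf.prob (binomial_pmf n p) {x. c \<le> \<bar>real x / real n - p\<bar>}) \<longlonglongrightarrow> 0"
proof -
  have b: "binomial_distribution p" using p by (simp add: binomial_distribution_def)
  have le: "measure_pmf.prob (binomial_pmf n p) {x. c \<le> \<bar>real x / real n - p\<bar>} \<le> 2 * exp (-2 * c\<^sup>2) ^ n"
    if "n > 0" for n
  proof -
    have "measure_pmf.prob (binomial_pmf n p) {x. c \<le> \<bar>real x / real n - p\<bar>} \<le> 2 * exp (real_of_int (- 2 * int n) * c\<^sup>2)"
      using binomial_distribution.prob_abs_ge'[OF b that] c by simp
    also have "exp (real_of_int (- 2 * int n) * c\<^sup>2) = exp (-2 * c\<^sup>2) ^ n"
      by (simp add: exp_of_nat_mult[symmetric] algebra_simps)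
    finally show ?thesis .
  qed
  have "(\<lambda>n. 2 * exp (-2 * c\<^sup>2) ^ n) \<longlonglongrightarrow> 2 * 0"
    using c by (intro tendsto_mult tendsto_const LIMSEQ_power_zero) auto
  then have lim: "(\<lambda>n. 2 * exp (-2 * c\<^sup>2) ^ n) \<longlonglongrightarrow> 0" by simp
  show ?thesis
  proof (rule tendsto_sandwich[OF _ _ tendsto_const lim])
    show "\<forall>\<^sub>F n in sequentially. 0 \<le> measure_pmf.prob (binomial_pmf n p) {x. c \<le> \<bar>real x / real n - p\<bar>}"
      by simp
    show "\<forall>\<^sub>F n in sequentially. measure_pmf.prob (binomial_pmf n p) {x. c \<le> \<bar>real x / real n - p\<bar>} \<le> 2 * exp (-2 * c\<^sup>2) ^ n"
      using eventually_gt_at_top[of 0] by eventually_elim (rule le)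
  qed
qed

lemma set_pmf_binomial_sub: "p \<in> {0..1} \<Longrightarrow> set_pmf (binomial_pmf n p) \<subseteq> {..n}"
  by (auto simp: set_pmf_binomial_eq split: if_splits)

lemma prob_pair_le: "measure_pmf.prob M {a, b} \<le> pmf M a + pmf M b"
proof -
  have "measure_pmf.prob M ({a} \<union> {b}) \<le> measure_pmf.prob M {a} + measure_pmf.prob M {b}"
    by (rule measure_subadditive) auto
  then show ?thesis by (simp add: measure_pmf_single insert_commute)
qed

lemma alpha_star_mono_jump:
  assumes e: "0 \<le> \<epsilon>" "\<epsilon> < 1"
  shows "alpha_star n i \<epsilon> \<le> alpha_star n (Suc i) \<epsilon>"
    and "alpha_star n (Suc i) \<epsilon> \<le> alpha_star n i \<epsilon> + pmf (binomial_pmf n ((1 - \<epsilon>)/2)) (Suc i)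
            + pmf (binomial_pmf n ((1 - \<epsilon>)/2)) (n - Suc i)"
proof -
  let ?M = "binomial_pmf n ((1 - \<epsilon>)/2)"
  define A where "A = {z. i < z \<and> z < n - i}"
  define B where "B = {z. Suc i < z \<and> z < n - Suc i}"
  have BA: "B \<subseteq> A" by (auto simp: A_def B_def)
  have "measure_pmf.prob ?M B \<le> measure_pmf.prob ?M A" using BA by (rule measure_pmf.finite_measure_mono) simp
  then show "alpha_star n i \<epsilon> \<le> alpha_star n (Suc i) \<epsilon>"
    by (simp add: alpha_star_def A_def B_def)
  have "A - B \<subseteq> {Suc i, n - Suc i}" by (auto simp: A_def B_def)
  then have "measure_pmf.prob ?M (A - B) \<le> measure_pmf.prob ?M {Suc i, n - Suc i}"
    by (rule measure_pmf.finite_measure_mono) simp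
  also have "\<dots> \<le> pmf ?M (Suc i) + pmf ?M (n - Suc i)" by (rule prob_pair_le)
  finally have "measure_pmf.prob ?M A - measure_pmf.prob ?M B \<le> pmf ?M (Suc i) + pmf ?M (n - Suc i)"
    using measure_pmf.finite_measure_Diff[of A ?M B] BA by simp
  then show "alpha_star n (Suc i) \<epsilon> \<le> alpha_star n i \<epsilon> + pmf ?M (Suc i) + pmf ?M (n - Suc i)"
    by (simp add: alpha_star_def A_def B_def)
qed

lemma alpha_star_0:
  assumes e: "0 \<le> \<epsilon>" "\<epsilon> < 1"
  shows "alpha_star n 0 \<epsilon> \<le> pmf (binomial_pmf n ((1 - \<epsilon>)/2)) 0 + pmf (binomial_pmf n ((1 - \<epsilon>)/2)) n"
proof -
  let ?M = "binomial_pmf n ((1 - \<epsilon>)/2)"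
  have "alpha_star n 0 \<epsilon> = measure_pmf.prob ?M (UNIV - {z. 0 < z \<and> z < n})"
    unfolding alpha_star_def by (subst measure_pmf.prob_compl[symmetric]) auto
  also have "\<dots> = measure_pmf.prob ?M ((UNIV - {z. 0 < z \<and> z < n}) \<inter> set_pmf ?M)"
    by (simp add: measure_Int_set_pmf)
  also have "\<dots> \<le> measure_pmf.prob ?M {0, n}"
  proof (rule measure_pmf.finite_measure_mono)
    show "(UNIV - {z. 0 < z \<and> z < n}) \<inter> set_pmf ?M \<subseteq> {0, n}"
      using set_pmf_binomial_sub[of "(1 - \<epsilon>)/2" n] e by auto
  qed simp
  also have "\<dots> \<le> pmf ?M 0 + pmf ?M n" by (rule prob_pair_le)
  finally show ?thesis .
qed

lemma alpha_star_n: "alpha_star n n \<epsilon> = 1"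
  by (simp add: alpha_star_def)

lemma alpha_close:
  assumes e: "0 \<le> \<epsilon>" "\<epsilon> < 1"
    and pm: "\<forall>j. pmf (binomial_pmf n ((1 - \<epsilon>)/2)) j \<le> \<eta>"
    and a: "0 < \<alpha>" "\<alpha> < 1"
    and km: "\<forall>j. \<bar>alpha_star n k \<epsilon> - \<alpha>\<bar> \<le> \<bar>alpha_star n j \<epsilon> - \<alpha>\<bar>"
  shows "\<bar>alpha_star n k \<epsilon> - \<alpha>\<bar> \<le> 2 * \<eta>"
proof -
  define js where "js = (LEAST j. alpha_star n j \<epsilon> \<ge> \<alpha>)"
  have ex: "alpha_star n n \<epsilon> \<ge> \<alpha>" using a by (simp add: alpha_star_n)
  have js1: "alpha_star n js \<epsilon> \<ge> \<alpha>" unfolding js_def by (rule LeastI[of _ n]) (rule ex)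
  have "\<bar>alpha_star n js \<epsilon> - \<alpha>\<bar> \<le> 2 * \<eta>"
  proof (cases js)
    case 0
    have "alpha_star n 0 \<epsilon> \<le> 2 * \<eta>" using alpha_star_0[OF e, of n] pm[rule_format, of 0] pm[rule_format, of n] by linarith
    then show ?thesis using js1 0 a by simp
  next
    case (Suc i)
    have "\<not> alpha_star n i \<epsilon> \<ge> \<alpha>"
    proof
      assume "alpha_star n i \<epsilon> \<ge> \<alpha>"
      then have "js \<le> i" unfolding js_def by (rule Least_le)
      then show False using Suc by simp
    qed
    moreover have "alpha_star n (Suc i) \<epsilon> \<le> alpha_star n i \<epsilon> + 2 * \<eta>"
      using alpha_star_mono_jump(2)[OF e, of n i] pm[rule_format, of "Suc i"] pm[rule_format, of "n - Suc i"] by linarith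
    ultimately show ?thesis using js1 Suc by simp
  qed
  then show ?thesis using km[rule_format, of js] by linarith
qed

lemma alpha_tendsto:
  assumes e: "0 \<le> \<epsilon>" "\<epsilon> < 1"
    and a: "0 < \<alpha>" "\<alpha> < 1"
    and km: "\<forall>n\<ge>1. \<forall>j. \<bar>alpha_star n (k n) \<epsilon> - \<alpha>\<bar> \<le> \<bar>alpha_star n j \<epsilon> - \<alpha>\<bar>"
  shows "(\<lambda>n. alpha_star n (k n) \<epsilon>) \<longlonglongrightarrow> \<alpha>"
proof (rule LIMSEQ_I)
  fix r :: real assume r: "r > 0"
  have p: "0 < (1 - \<epsilon>)/2" "(1 - \<epsilon>)/2 < 1" using e by auto
  obtain N where N: "\<forall>n\<ge>N. \<forall>j. pmf (binomial_pmf n ((1 - \<epsilon>)/2)) j \<le> r / 4"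
    using pmf_bin_small[OF p, of "r/4"] r by auto
  show "\<exists>no. \<forall>n\<ge>no. norm (alpha_star n (k n) \<epsilon> - \<alpha>) < r"
  proof (intro exI allI impI)
    fix n assume n: "n \<ge> max N 1"
    have "\<bar>alpha_star n (k n) \<epsilon> - \<alpha>\<bar> \<le> 2 * (r/4)"
      using alpha_close[OF e _ a, of n "r/4" "k n"] N n km by auto
    then show "norm (alpha_star n (k n) \<epsilon> - \<alpha>) < r" using r by simp
  qed
qed

lemma alpha_star_low:
  assumes e: "0 \<le> \<epsilon>" "\<epsilon> < 1" and n: "n > 0" and c: "c > 0"
    and j: "real j / real n \<le> (1 - \<epsilon>)/2 - c"
  shows "alpha_star n j \<epsilon> \<le> measure_pmf.prob (binomial_pmf n ((1 - \<epsilon>)/2)) {x. c \<le> \<bar>real x / real n - (1 - \<epsilon>)/2\<bar>}"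
proof -
  let ?p = "(1 - \<epsilon>)/2"
  let ?M = "binomial_pmf n ?p"
  have "alpha_star n j \<epsilon> = measure_pmf.prob ?M (UNIV - {z. j < z \<and> z < n - j})"
    unfolding alpha_star_def by (subst measure_pmf.prob_compl[symmetric]) auto
  also have "\<dots> \<le> measure_pmf.prob ?M {x. c \<le> \<bar>real x / real n - ?p\<bar>}"
  proof (rule measure_pmf.finite_measure_mono)
    show "UNIV - {z. j < z \<and> z < n - j} \<subseteq> {x. c \<le> \<bar>real x / real n - ?p\<bar>}"
    proof
      fix z assume z: "z \<in> UNIV - {z. j < z \<and> z < n - j}"
      have jn: "real j \<le> real n * (?p - c)" using j n by (simp add: divide_le_eq mult.commute)
      show "z \<in> {x. c \<le> \<bar>real x / real n - ?p\<bar>}"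
      proof (cases "z \<le> j")
        case True
        then have "real z \<le> real n * (?p - c)" using jn by linarith
        then have "real z / real n \<le> ?p - c" using n by (simp add: divide_le_eq mult.commute)
        then show ?thesis by simp
      next
        case False
        then have "z \<ge> n - j" using z by auto
        moreover have "j \<le> n"
        proof -
          have "?p - c \<le> 1" using e c by argo
          then have "real n * (?p - c) \<le> real n * 1" by (intro mult_left_mono) auto
          then have "real j \<le> real n" using jn by linarith
          then show ?thesis by simp
        qed
        ultimately have "real z \<ge> real n - real j" by linarith
        moreover have "real n * (1 - ?p + c) = real n - real n * (?p - c)" by (simp add: algebra_simps)
        ultimately have "real z \<ge> real n * (1 - ?p + c)" using jn by linarith
        then have "real z / real n \<ge> 1 - ?p + c" using n by (simp add: le_divide_eq mult.commute)
        moreover have "1 - ?p + c - ?p \<ge> c" using e by simp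
        ultimately have "c \<le> real z / real n - ?p" by argo
        then show ?thesis by (metis abs_ge_self order_trans mem_Collect_eq)
      qed
    qed
  qed simp
  finally show ?thesis .
qed

lemma alpha_star_high:
  assumes e: "0 \<le> \<epsilon>" "\<epsilon> < 1" and n: "n > 0" and c: "c > 0"
    and j: "real j / real n \<ge> (1 - \<epsilon>)/2 + c"
  shows "alpha_star n j \<epsilon> \<ge> 1 - measure_pmf.prob (binomial_pmf n ((1 - \<epsilon>)/2)) {x. c \<le> \<bar>real x / real n - (1 - \<epsilon>)/2\<bar>}"
proof -
  let ?p = "(1 - \<epsilon>)/2"
  let ?M = "binomial_pmf n ?p"
  have "measure_pmf.prob ?M {z. j < z \<and> z < n - j} \<le> measure_pmf.prob ?M {x. c \<le> \<bar>real x / real n - ?p\<bar>}"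
  proof (rule measure_pmf.finite_measure_mono)
    show "{z. j < z \<and> z < n - j} \<subseteq> {x. c \<le> \<bar>real x / real n - ?p\<bar>}"
    proof
      fix z assume z: "z \<in> {z. j < z \<and> z < n - j}"
      then have "real z / real n \<ge> real j / real n" using n by (simp add: divide_right_mono)
      then show "z \<in> {x. c \<le> \<bar>real x / real n - ?p\<bar>}" using j by simp
    qed
  qed simp
  then show ?thesis by (simp add: alpha_star_def)
qed

lemma k_ratio:
  assumes e: "0 \<le> \<epsilon>" "\<epsilon> < 1"
    and a: "0 < \<alpha>" "\<alpha> < 1"
    and km: "\<forall>n\<ge>1. \<forall>j. \<bar>alpha_star n (k n) \<epsilon> - \<alpha>\<bar> \<le> \<bar>alpha_star n j \<epsilon> - \<alpha>\<bar>"
  shows "(\<lambda>n. real (k n) / real n) \<longlonglongrightarrow> (1 - \<epsilon>)/2"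
proof (rule LIMSEQ_I)
  fix c :: real assume c: "c > 0"
  let ?p = "(1 - \<epsilon>)/2"
  let ?T = "\<lambda>n. measure_pmf.prob (binomial_pmf n ?p) {x. c \<le> \<bar>real x / real n - ?p\<bar>}"
  have T: "?T \<longlonglongrightarrow> 0" using e c by (intro bin_tail) auto
  have A: "(\<lambda>n. alpha_star n (k n) \<epsilon>) \<longlonglongrightarrow> \<alpha>" using alpha_tendsto[OF e a km] .
  define d where "d = min (\<alpha>/2) ((1 - \<alpha>)/2)"
  have d: "d > 0" using a by (simp add: d_def)
  have ev1: "eventually (\<lambda>n. ?T n < d) sequentially"
    using order_tendstoD(2)[OF T d] .
  have ev2: "eventually (\<lambda>n. dist (alpha_star n (k n) \<epsilon>) \<alpha> < d) sequentially"
    using tendstoD[OF A d] .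
  obtain N where N: "\<forall>n\<ge>N. ?T n < d \<and> dist (alpha_star n (k n) \<epsilon>) \<alpha> < d \<and> n > 0"
    using eventually_conj[OF ev1 eventually_conj[OF ev2 eventually_gt_at_top[of 0]]]
    unfolding eventually_sequentially by blast
  show "\<exists>no. \<forall>n\<ge>no. norm (real (k n) / real n - ?p) < c"
  proof (intro exI allI impI)
    fix n assume n: "n \<ge> N"
    have h: "?T n < d" "dist (alpha_star n (k n) \<epsilon>) \<alpha> < d" "n > 0" using N n by auto
    have h1: "?T n < \<alpha>/2" "?T n < (1 - \<alpha>)/2" using h(1) by (auto simp: d_def)
    have h2: "\<bar>alpha_star n (k n) \<epsilon> - \<alpha>\<bar> < \<alpha>/2" "\<bar>alpha_star n (k n) \<epsilon> - \<alpha>\<bar> < (1 - \<alpha>)/2"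
      using h(2) by (auto simp: d_def dist_real_def)
    have h3: "alpha_star n (k n) \<epsilon> - \<alpha> < \<alpha>/2" "-(alpha_star n (k n) \<epsilon> - \<alpha>) < \<alpha>/2"
        "alpha_star n (k n) \<epsilon> - \<alpha> < (1 - \<alpha>)/2" "-(alpha_star n (k n) \<epsilon> - \<alpha>) < (1 - \<alpha>)/2"
      using h2 abs_less_iff by blast+
    have "\<not> real (k n) / real n \<le> ?p - c"
    proof
      assume "real (k n) / real n \<le> ?p - c"
      then have "alpha_star n (k n) \<epsilon> \<le> ?T n" using alpha_star_low[OF e h(3) c] by blast
      then show False using h1 h3 by linarith
    qed
    moreover have "\<not> real (k n) / real n \<ge> ?p + c"
    proof
      assume "real (k n) / real n \<ge> ?p + c"
      then have "alpha_star n (k n) \<epsilon> \<ge> 1 - ?T n" using alpha_star_high[OF e h(3) c] by blast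
      moreover have "alpha_star n (k n) \<epsilon> < (1 + \<alpha>)/2" using h3(3) by argo
      moreover have "(1 + \<alpha>)/2 < 1 - ?T n" using h1(2) by argo
      ultimately show False by linarith
    qed
    ultimately show "norm (real (k n) / real n - ?p) < c" by auto
  qed
qed

locale symF =
  fixes F :: "real measure" and f :: "real \<Rightarrow> real" and \<theta> :: real
  assumes F_distr: "real_distribution F"
    and F_cont: "\<forall>x. isCont (cdf F) x"
    and f_nonneg: "\<forall>x. 0 \<le> f x"
    and f_meas: "f \<in> borel_measurable borel"
    and F_density: "F = density lborel (\<lambda>x. ennreal (f x))"
    and f_symm: "\<forall>t. f (\<theta> + t) = f (\<theta> - t)"
    and f_unimodal: "mono_on {..\<theta>} f \<and> antimono_on {\<theta>..} f"
begin

interpretation RD: real_distribution F by (rule F_distr)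

abbreviation "Fc \<equiv> cdf F"

lemma f_meas' [measurable]: "f \<in> borel_measurable borel" by (rule f_meas)

lemma emeasure_F: "A \<in> sets borel \<Longrightarrow> emeasure F A = (\<integral>\<^sup>+ x. ennreal (f x) * indicator A x \<partial>lborel)"
  unfolding F_density by (subst emeasure_density) auto

lemma atom0: "measure F {x} = 0"
  using F_cont RD.isCont_cdf by blast

lemma Fc_le1: "Fc x \<le> 1" by (rule RD.cdf_bounded_prob)
lemma Fc_ge0: "Fc x \<ge> 0" by (rule RD.cdf_nonneg)
lemma Fc_mono: "x \<le> y \<Longrightarrow> Fc x \<le> Fc y" by (rule RD.cdf_nondecreasing)

lemma f_refl: "f (2 * \<theta> - x) = f x"
  using f_symm[rule_format, of "\<theta> - x"] by (simp add: algebra_simps)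

lemma measure_F_ge: "measure F {a..} = 1 - Fc a"
proof -
  have "measure F {a..} = measure F (UNIV - {..<a})"
    by (intro arg_cong[where f="measure F"]) auto
  also have "\<dots> = 1 - measure F {..<a}" by (subst RD.prob_compl[symmetric]) auto
  also have "measure F {..<a} = measure F {..a}"
  proof -
    have "measure F {..a} = measure F ({..<a} \<union> {a})" by (intro arg_cong[where f="measure F"]) auto
    also have "\<dots> = measure F {..<a} + measure F {a}" by (subst RD.finite_measure_Union) auto
    finally show ?thesis using atom0 by simp
  qed
  finally show ?thesis by (simp add: cdf_def)
qed

lemma Fc_sym: "Fc (\<theta> - t) = 1 - Fc (\<theta> + t)"
proof -
  have "emeasure F {..\<theta> - t} = (\<integral>\<^sup>+ x. ennreal (f x) * indicator {..\<theta> - t} x \<partial>lborel)"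
    by (rule emeasure_F) auto
  also have "\<dots> = ennreal \<bar>-1\<bar> * (\<integral>\<^sup>+ x. ennreal (f (2*\<theta> + (-1) * x)) * indicator {..\<theta> - t} (2*\<theta> + (-1) * x) \<partial>lborel)"
    by (rule nn_integral_real_affine) auto
  also have "\<dots> = (\<integral>\<^sup>+ x. ennreal (f x) * indicator {\<theta> + t..} x \<partial>lborel)"
  proof -
    have "ennreal (f (2*\<theta> + (-1) * x)) * indicator {..\<theta> - t} (2*\<theta> + (-1) * x) = ennreal (f x) * indicator {\<theta> + t..} x" for x
      using f_refl[of x] by (auto simp: indicator_def)
    then show ?thesis by simp
  qed
  also have "\<dots> = emeasure F {\<theta> + t..}" by (rule emeasure_F[symmetric]) auto
  finally have "measure F {..\<theta> - t} = measure F {\<theta> + t..}" by (simp add: RD.emeasure_eq_measure)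
  then show ?thesis by (simp add: cdf_def measure_F_ge)
qed

lemma f_shift_le:
  assumes L: "L \<ge> 0" and s: "2 * s + L \<le> 2 * \<theta>"
  shows "f s \<le> f (s + L)"
proof -
  have mono: "mono_on {..\<theta>} f" using f_unimodal by simp
  show ?thesis
  proof (cases "s + L \<le> \<theta>")
    case True
    then show ?thesis using L by (intro mono_onD[OF mono]) auto
  next
    case False
    have "f (s + L) = f (2 * \<theta> - (s + L))" using f_refl[of "s + L"] by simp
    moreover have "f s \<le> f (2 * \<theta> - (s + L))"
      using False s by (intro mono_onD[OF mono]) auto
    ultimately show ?thesis by simp
  qed
qed

lemma mass_shift_mono:
  assumes xy: "x \<le> y" and L: "L \<ge> 0" and y: "2 * y + L \<le> 2 * \<theta>"
  shows "Fc y - Fc x \<le> Fc (y + L) - Fc (x + L)"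
proof (cases "x = y")
  case True then show ?thesis by simp
next
  case False
  then have xy': "x < y" using xy by simp
  have "emeasure F {x<..y} = (\<integral>\<^sup>+ s. ennreal (f s) * indicator {x<..y} s \<partial>lborel)"
    by (rule emeasure_F) auto
  also have "\<dots> \<le> (\<integral>\<^sup>+ s. ennreal (f (L + 1 * s)) * indicator {x+L<..y+L} (L + 1 * s) \<partial>lborel)"
  proof (rule nn_integral_mono)
    fix s
    show "ennreal (f s) * indicator {x<..y} s \<le> ennreal (f (L + 1 * s)) * indicator {x+L<..y+L} (L + 1 * s)"
    proof (cases "s \<in> {x<..y}")
      case True
      then have "f s \<le> f (s + L)" using y L by (intro f_shift_le) auto
      then show ?thesis using True by (auto simp: indicator_def add.commute intro!: ennreal_leI)
    next
      case False then show ?thesis by simp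
    qed
  qed
  also have "\<dots> = ennreal \<bar>1\<bar> * (\<integral>\<^sup>+ s. ennreal (f (L + 1 * s)) * indicator {x+L<..y+L} (L + 1 * s) \<partial>lborel)"
    by simp
  also have "\<dots> = (\<integral>\<^sup>+ s. ennreal (f s) * indicator {x+L<..y+L} s \<partial>lborel)"
    by (rule nn_integral_real_affine[symmetric]) auto
  also have "\<dots> = emeasure F {x+L<..y+L}" by (rule emeasure_F[symmetric]) auto
  finally have "measure F {x<..y} \<le> measure F {x+L<..y+L}"
    by (simp add: RD.emeasure_eq_measure)
  then show ?thesis using xy' by (simp add: RD.cdf_diff_eq)
qed

lemma Fc_strict:
  assumes xy: "x < y" and px: "0 < Fc x" and py: "Fc y < 1"
  shows "Fc x < Fc y"
proof (rule ccontr)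
  assume "\<not> Fc x < Fc y"
  then have eq: "Fc x = Fc y" using Fc_mono[of x y] xy by simp
  have "measure F {x<..y} = 0" using RD.cdf_diff_eq[OF xy] eq by simp
  then have "emeasure F {x<..y} = 0" by (simp add: RD.emeasure_eq_measure)
  then have "(\<integral>\<^sup>+ s. ennreal (f s) * indicator {x<..y} s \<partial>lborel) = 0"
    using emeasure_F[of "{x<..y}"] by simp
  then have AE0: "AE s in lborel. ennreal (f s) * indicator {x<..y} s = 0"
    by (subst nn_integral_0_iff_AE[symmetric]) auto
  have "\<exists>s\<in>{x<..<y}. f s = 0"
  proof (rule ccontr)
    assume "\<not> (\<exists>s\<in>{x<..<y}. f s = 0)"
    then have imp: "\<forall>s. ennreal (f s) * indicator {x<..y} s = 0 \<longrightarrow> s \<notin> {x<..<y}"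
      using f_nonneg by (auto simp: indicator_def)
    have "AE s in lborel. s \<notin> {x<..<y}"
      by (rule eventually_mono[OF AE0]) (use imp in blast)
    then have "emeasure lborel {x<..<y} = 0"
      by (subst (asm) AE_iff_measurable[of "{x<..<y}"]) auto
    then show False using xy by simp
  qed
  then obtain s where s: "x < s" "s < y" "f s = 0" by auto
  show False
  proof (cases "s \<le> \<theta>")
    case True
    have z: "f r = 0" if "r \<le> s" for r
    proof -
      have "f r \<le> f s" using f_unimodal that True by (intro mono_onD[of "{..\<theta>}" f]) auto
      then show ?thesis using s f_nonneg by (metis order_antisym)
    qed
    have "emeasure F {..s} = (\<integral>\<^sup>+ r. ennreal (f r) * indicator {..s} r \<partial>lborel)"
      by (rule emeasure_F) auto
    also have "\<dots> = 0"
    proof -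
      have e: "(\<lambda>r. ennreal (f r) * indicator {..s} r) = (\<lambda>r. 0)"
        using z by (auto simp: indicator_def fun_eq_iff)
      show ?thesis by (simp add: e)
    qed
    finally have "Fc s = 0" by (simp add: RD.emeasure_eq_measure cdf_def)
    moreover have "Fc x \<le> Fc s" using s by (intro Fc_mono) simp
    ultimately show False using px by simp
  next
    case False
    have z: "f r = 0" if "r \<ge> s" for r
    proof -
      have "f r \<le> f s" using monotone_onD[OF conjunct2[OF f_unimodal], of s r] that False by auto
      then show ?thesis using s f_nonneg by (metis order_antisym)
    qed
    have "emeasure F {s..} = (\<integral>\<^sup>+ r. ennreal (f r) * indicator {s..} r \<partial>lborel)"
      by (rule emeasure_F) auto
    also have "\<dots> = 0"
    proof -
      have e: "(\<lambda>r. ennreal (f r) * indicator {s..} r) = (\<lambda>r. 0)"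
        using z by (auto simp: indicator_def fun_eq_iff)
      show ?thesis by (simp add: e)
    qed
    finally have "measure F {s..} = 0" by (simp add: RD.emeasure_eq_measure)
    then have "Fc s = 1" using measure_F_ge[of s] by simp
    moreover have "Fc s \<le> Fc y" using s by (intro Fc_mono) simp
    ultimately show False using py by simp
  qed
qed

end

context symF begin

interpretation RD: real_distribution F by (rule F_distr)

abbreviation "Q \<equiv> quantile Fc"

lemma Fc_below: "p > 0 \<Longrightarrow> \<exists>b. \<forall>x\<le>b. Fc x < p"
proof -
  assume p: "p > 0"
  have "eventually (\<lambda>x. Fc x < p) at_bot"
    using order_tendstoD(2)[OF RD.cdf_lim_at_bot p] .
  then show ?thesis by (simp add: eventually_at_bot_linorder)
qed

lemma Fc_above: "p < 1 \<Longrightarrow> \<exists>b. \<forall>x\<ge>b. Fc x > p"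
proof -
  assume p: "p < 1"
  have "eventually (\<lambda>x. Fc x > p) at_top"
    using order_tendstoD(1)[OF RD.cdf_lim_at_top_prob p] .
  then show ?thesis by (simp add: eventually_at_top_linorder)
qed

lemma S_ne: "p < 1 \<Longrightarrow> {x. Fc x \<ge> p} \<noteq> {}"
  using Fc_above[of p] by (auto intro: less_imp_le)

lemma S_bdd: "p > 0 \<Longrightarrow> bdd_below {x. Fc x \<ge> p}"
proof -
  assume "p > 0"
  then obtain b where b: "\<forall>x\<le>b. Fc x < p" using Fc_below by blast
  show ?thesis
  proof (rule bdd_belowI[of _ b])
    fix x assume "x \<in> {x. Fc x \<ge> p}"
    then show "b \<le> x" using b by (meson mem_Collect_eq not_le order_less_imp_le leD)
  qed
qed

lemma Q_le: assumes "0 < p" "p < 1" "Fc x \<ge> p" shows "Q p \<le> x"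
  unfolding quantile_def using assms by (intro cInf_lower S_bdd) auto

lemma lt_Q: assumes "0 < p" "p < 1" "x < Q p" shows "Fc x < p"
  using Q_le[of p x] assms by force

lemma Fc_Q: assumes p: "0 < p" "p < 1" shows "Fc (Q p) = p"
proof -
  define q where "q = Q p"
  have cont: "isCont Fc q" using F_cont by simp
  have inv: "(\<lambda>n. inverse (real (Suc n))) \<longlonglongrightarrow> 0" by (rule LIMSEQ_inverse_real_of_nat)
  have up: "(\<lambda>n. Fc (q + inverse (real (Suc n)))) \<longlonglongrightarrow> Fc q"
    using isCont_tendsto_compose[OF cont, of "\<lambda>n. q + inverse (real (Suc n))"] tendsto_add[OF tendsto_const inv, of q]
    by simp
  have dn: "(\<lambda>n. Fc (q - inverse (real (Suc n)))) \<longlonglongrightarrow> Fc q"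
    using isCont_tendsto_compose[OF cont, of "\<lambda>n. q - inverse (real (Suc n))"] tendsto_diff[OF tendsto_const inv, of q]
    by simp
  have ge: "Fc (q + inverse (real (Suc n))) \<ge> p" for n
  proof -
    have "q < q + inverse (real (Suc n))" by simp
    then obtain x where x: "x \<in> {x. Fc x \<ge> p}" "x < q + inverse (real (Suc n))"
      unfolding q_def quantile_def using cInf_less_iff[OF S_ne S_bdd] p by blast
    have "Fc x \<le> Fc (q + inverse (real (Suc n)))" using x(2) by (intro Fc_mono) simp
    then show ?thesis using x(1) by simp
  qed
  have le: "Fc (q - inverse (real (Suc n))) \<le> p" for n
    using lt_Q[OF p, of "q - inverse (real (Suc n))"] by (simp add: q_def)
  have "Fc q \<ge> p" by (rule LIMSEQ_le_const[OF up]) (use ge in auto)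
  moreover have "Fc q \<le> p" by (rule LIMSEQ_le_const2[OF dn]) (use le in auto)
  ultimately show ?thesis by (simp add: q_def)
qed

lemma Q_lt: assumes p: "0 < p" "p < 1" and x: "Q p < x" shows "p < Fc x"
proof (cases "Fc x < 1")
  case True
  have "Fc (Q p) < Fc x" using Fc_strict[OF x] Fc_Q[OF p] p True by simp
  then show ?thesis using Fc_Q[OF p] by simp
next
  case False then show ?thesis using p by simp
qed

lemma Q_unique: assumes p: "0 < p" "p < 1" and x: "Fc x = p" shows "Q p = x"
  using Q_le[OF p, of x] Q_lt[OF p, of x] x by force

lemma Q_sym: assumes p: "0 < p" "p < 1" shows "Q (1 - p) = 2 * \<theta> - Q p"
proof -
  have "Fc (2 * \<theta> - Q p) = Fc (\<theta> - (Q p - \<theta>))" by (simp add: algebra_simps)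
  also have "\<dots> = 1 - Fc (\<theta> + (Q p - \<theta>))" by (rule Fc_sym)
  also have "\<dots> = 1 - p" using Fc_Q[OF p] by simp
  finally show ?thesis using p by (intro Q_unique) auto
qed

lemma Q_strict_mono: assumes "0 < p" "p < p'" "p' < 1" shows "Q p < Q p'"
proof (rule ccontr)
  assume "\<not> Q p < Q p'"
  then have "Fc (Q p') \<le> Fc (Q p)" using Fc_mono by simp
  then show False using Fc_Q[of p] Fc_Q[of p'] assms by simp
qed

lemma Q_mono: assumes "0 < p" "p \<le> p'" "p' < 1" shows "Q p \<le> Q p'"
  using Q_strict_mono[of p p'] assms by (cases "p = p'") auto

definition mL :: "real \<Rightarrow> real \<Rightarrow> real" where "mL L x = Fc (x + L) - Fc x"

lemma mL_refl: "mL L x = mL L (2 * \<theta> - L - x)"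
proof -
  have a: "Fc (x + L) = 1 - Fc (2 * \<theta> - x - L)"
    using Fc_sym[of "x + L - \<theta>"] by (simp add: algebra_simps)
  have b: "Fc x = 1 - Fc (2 * \<theta> - x)"
    using Fc_sym[of "x - \<theta>"] by (simp add: algebra_simps)
  show ?thesis unfolding mL_def using a b by (simp add: algebra_simps)
qed

lemma mL_qc:
  assumes "a \<le> b" "b \<le> c" "L \<ge> 0"
  shows "min (mL L a) (mL L c) \<le> mL L b"
proof (cases "2 * b + L \<le> 2 * \<theta>")
  case True
  have "Fc b - Fc a \<le> Fc (b + L) - Fc (a + L)" using mass_shift_mono[OF assms(1,3) True] .
  then have "mL L a \<le> mL L b" by (simp add: mL_def)
  then show ?thesis by simp
next
  case False
  have h: "2 * (2 * \<theta> - L - b) + L \<le> 2 * \<theta>" using False by simp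
  have "Fc (2 * \<theta> - L - b) - Fc (2 * \<theta> - L - c) \<le> Fc (2 * \<theta> - L - b + L) - Fc (2 * \<theta> - L - c + L)"
    using mass_shift_mono[OF _ assms(3) h, of "2 * \<theta> - L - c"] assms by simp
  then have "mL L (2 * \<theta> - L - c) \<le> mL L (2 * \<theta> - L - b)" by (simp add: mL_def)
  then have "mL L c \<le> mL L b" using mL_refl[of L c] mL_refl[of L b] by simp
  then show ?thesis by simp
qed

lemma AK:
  assumes c0: "0 < c0" and c1: "c0 + c1 = 1" and w: "0 \<le> w" "c0 + w \<le> c1"
    and hl: "Fc l \<ge> c0" and hu: "Fc u \<le> c1" and hw: "Fc u - Fc l \<le> w"
  shows "u - l \<le> Q c1 - Q (c1 - w)"
proof (rule ccontr)
  assume "\<not> u - l \<le> Q c1 - Q (c1 - w)"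
  then have Lgt: "u - l > Q c1 - Q (c1 - w)" by simp
  define L where "L = u - l"
  have c1lt: "c1 < 1" and c1w: "0 < c1 - w" "c1 - w < 1" and c0w: "0 < c0 + w" "c0 + w < 1"
    using c0 c1 w by auto
  have c1pos: "0 < c1" using c1w w by simp
  have c0lt: "c0 < 1" using c0w w by simp
  have Lst: "Q c1 - Q (c1 - w) \<ge> 0" using Q_mono[of "c1 - w" c1] c1w w c1lt by simp
  then have L0: "L \<ge> 0" using Lgt by (simp add: L_def)
  have x0l: "Q c0 \<le> l" using Q_le[OF c0 c0lt hl] .
  have uQ: "u \<le> Q c1"
  proof (rule ccontr)
    assume "\<not> u \<le> Q c1"
    then have "c1 < Fc u" using Q_lt[OF c1pos c1lt] by simp
    then show False using hu by simp
  qed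
  have lx1: "l \<le> Q c1 - L" using uQ by (simp add: L_def)
  have m1: "mL L (Q c1 - L) > w"
  proof -
    have "Q c1 - L < Q (c1 - w)" using Lgt by (simp add: L_def)
    then have "Fc (Q c1 - L) < c1 - w" using lt_Q[OF c1w] by simp
    then show ?thesis using Fc_Q[OF c1pos c1lt] by (simp add: mL_def)
  qed
  have m0: "mL L (Q c0) > w"
  proof -
    have h0: "1 - c1 = c0" and h1: "1 - (c1 - w) = c0 + w" using c1 by auto
    have e0: "Q c0 = 2 * \<theta> - Q c1" using Q_sym[OF c1pos c1lt] unfolding h0 .
    have e1: "Q (c0 + w) = 2 * \<theta> - Q (c1 - w)" using Q_sym[OF c1w] unfolding h1 .
    have "Q (c0 + w) < Q c0 + L" using e0 e1 Lgt by (simp add: L_def)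
    then have "c0 + w < Fc (Q c0 + L)" using Q_lt[OF c0w] by simp
    then show ?thesis using Fc_Q[OF c0 c0lt] by (simp add: mL_def add.commute)
  qed
  have "min (mL L (Q c0)) (mL L (Q c1 - L)) \<le> mL L l" using mL_qc[OF x0l lx1 L0] .
  moreover have "mL L l = Fc u - Fc l" by (simp add: mL_def L_def)
  ultimately show False using m0 m1 hw by linarith
qed

end

lemma iid_prob: "real_distribution G \<Longrightarrow> prob_space (iid G)"
  unfolding iid_def by (intro prob_space_PiM) (auto simp: real_distribution_def)

lemma sets_iid: "real_distribution G \<Longrightarrow> sets (iid G) = sets (PiM UNIV (\<lambda>_::nat. (borel::real measure)))"
  unfolding iid_def by (intro sets_PiM_cong) (auto simp: real_distribution.events_eq_borel)

lemma space_iid: "real_distribution G \<Longrightarrow> space (iid G) = UNIV"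
  unfolding iid_def by (simp add: space_PiM real_distribution.space_eq_univ)

lemma meas_iid:
  assumes "real_distribution G" "f \<in> borel_measurable (PiM UNIV (\<lambda>_::nat. (borel::real measure)))"
  shows "f \<in> borel_measurable (iid G)"
  by (subst measurable_cong_sets[OF sets_iid[OF assms(1)] refl]) (rule assms(2))

lemma meas_iid_gen:
  assumes "real_distribution G" "f \<in> measurable (PiM UNIV (\<lambda>_::nat. (borel::real measure))) N"
  shows "f \<in> measurable (iid G) N"
  by (subst measurable_cong_sets[OF sets_iid[OF assms(1)] refl]) (rule assms(2))

lemma sets_iid_I:
  assumes "real_distribution G" "A \<in> sets (PiM UNIV (\<lambda>_::nat. (borel::real measure)))"
  shows "A \<in> sets (iid G)"
  using assms sets_iid by blast

lemma iid_component:
  assumes G: "real_distribution G"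
  shows "distr (iid G) borel (\<lambda>\<omega>. \<omega> i) = G"
proof -
  have pG: "prob_space G" using G by (simp add: real_distribution_def)
  interpret product_prob_space "\<lambda>_::nat. G" UNIV
    by (simp add: product_prob_space_def product_sigma_finite_def product_prob_space_axioms_def
        prob_space_imp_sigma_finite pG)
  have "distr (iid G) G (\<lambda>\<omega>. \<omega> i) = G" unfolding iid_def by (rule PiM_component) simp
  moreover have "distr (iid G) borel (\<lambda>\<omega>. \<omega> i) = distr (iid G) G (\<lambda>\<omega>. \<omega> i)"
    by (rule distr_cong) (use G in \<open>auto simp: real_distribution.events_eq_borel\<close>)
  ultimately show ?thesis by simp
qed

lemma iid_indep:
  assumes G: "real_distribution G"
  shows "prob_space.indep_vars (iid G) (\<lambda>_. borel) (\<lambda>i \<omega>. \<omega> i) UNIV"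
proof -
  interpret P: prob_space "iid G" by (rule iid_prob[OF G])
  have rv: "(\<lambda>\<omega>::nat\<Rightarrow>real. \<omega> i) \<in> measurable (iid G) (borel::real measure)" for i
    by (rule meas_iid_gen[OF G]) simp
  have "distr (iid G) (\<Pi>\<^sub>M i\<in>UNIV. borel) (\<lambda>x. \<lambda>i\<in>UNIV. x i) = (\<Pi>\<^sub>M i\<in>UNIV. distr (iid G) borel (\<lambda>x. x i))"
  proof -
    have "(\<lambda>x::nat\<Rightarrow>real. \<lambda>i\<in>UNIV. x i) = (\<lambda>x. x)" by (auto simp: fun_eq_iff)
    then have "distr (iid G) (\<Pi>\<^sub>M i\<in>UNIV. borel) (\<lambda>x. \<lambda>i\<in>UNIV. x i) = distr (iid G) (\<Pi>\<^sub>M i\<in>UNIV. borel) (\<lambda>x. x)"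
      by simp
    also have "\<dots> = iid G" by (rule distr_id2) (simp add: sets_iid[OF G])
    also have "\<dots> = (\<Pi>\<^sub>M i\<in>UNIV. distr (iid G) borel (\<lambda>x. x i))"
    proof -
      have e: "(\<lambda>i. distr (iid G) borel (\<lambda>x. x i)) = (\<lambda>_. G)" using iid_component[OF G] by auto
      show ?thesis by (subst e) (simp add: iid_def)
    qed
    finally show ?thesis .
  qed
  then show ?thesis by (subst P.indep_vars_iff_distr_eq_PiM) (auto simp: rv)
qed

lemma sum_ind_card: "(\<Sum>i<(n::nat). indicator A ((\<omega>::nat\<Rightarrow>real) i) :: real) = real (card {i\<in>{..<n}. \<omega> i \<in> A})"
proof -
  have "(\<Sum>i<n. indicator A (\<omega> i) :: real) = (\<Sum>i<n. indicator {i. \<omega> i \<in> A} i)"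
    by (auto simp: indicator_def)
  also have "\<dots> = (\<Sum>i<n. real (indicator {i. \<omega> i \<in> A} i :: nat))" by (simp add: indicator_def)
  also have "\<dots> = real (\<Sum>i<n. (indicator {i. \<omega> i \<in> A} i :: nat))" by (rule of_nat_sum[symmetric])
  also have "(\<Sum>i<n. (indicator {i. \<omega> i \<in> A} i :: nat)) = card ({..<n} \<inter> {i. \<omega> i \<in> A})"
    by (rule sum_indicator_eq_card) simp
  finally show ?thesis by (simp add: Int_def)
qed

lemma hoeffding_count:
  assumes G: "real_distribution G" and A: "A \<in> sets borel" and n: "n > 0" and c: "c \<ge> 0"
  shows "measure (iid G) {\<omega>. c \<le> \<bar>real (card {i\<in>{..<n}. \<omega> i \<in> A}) / real n - measure G A\<bar>}
           \<le> 2 * exp (-2 * c\<^sup>2) ^ n"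
proof -
  interpret P: prob_space "iid G" by (rule iid_prob[OF G])
  interpret RG: real_distribution G by (rule G)
  define X where "X = (\<lambda>(i::nat) (\<omega>::nat\<Rightarrow>real). indicator A (\<omega> i) :: real)"
  have Xm [measurable]: "X i \<in> borel_measurable (iid G)" for i
    unfolding X_def by (rule meas_iid[OF G]) (use A in measurable)
  have distrX: "distr (iid G) borel (X i) = distr G borel (indicator A)" for i
  proof -
    have "distr (iid G) borel (X i) = distr (distr (iid G) borel (\<lambda>\<omega>. \<omega> i)) borel (indicator A)"
      unfolding X_def by (subst distr_distr) (auto simp: o_def intro!: meas_iid_gen[OF G] borel_measurable_indicator A)
    then show ?thesis by (simp add: iid_component[OF G])
  qed
  have EY: "measure G A = P.expectation (X 0)"
  proof -
    have "P.expectation (X 0) = integral\<^sup>L (distr (iid G) borel (X 0)) (\<lambda>x. x)"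
      by (rule integral_distr[symmetric]) auto
    also have "\<dots> = integral\<^sup>L (distr G borel (indicator A)) (\<lambda>x. x)" by (simp add: distrX)
    also have "\<dots> = integral\<^sup>L G (indicator A)"
      by (rule integral_distr) (use A in auto)
    also have "\<dots> = measure G A" using A by simp
    finally show ?thesis by simp
  qed
  interpret H: Hoeffding_ineq_iid "iid G" "{..<n}" X "X 0" 0 1 "measure G A"
  proof unfold_locales
    show "P.indep_vars (\<lambda>_. borel) X {..<n}"
    proof -
      have "P.indep_vars (\<lambda>_. borel) (\<lambda>i \<omega>. indicator A ((\<lambda>i \<omega>. \<omega> i) i \<omega>) :: real) UNIV"
        by (rule P.indep_vars_compose2[OF iid_indep[OF G]]) (use A in measurable)
      then have "P.indep_vars (\<lambda>_. borel) X UNIV" by (simp add: X_def)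
      then show ?thesis by (rule P.indep_vars_subset) auto
    qed
    show "distr (iid G) borel (X i) = distr (iid G) borel (X 0)" for i by (simp add: distrX)
    show "AE x in iid G. X 0 x \<in> {0..1}" by (auto simp: X_def indicator_def)
    show "measure G A \<equiv> P.expectation (X 0)" using EY by simp
  qed simp_all
  have "P.prob {x \<in> space (iid G). real n * c \<le> \<bar>(\<Sum>i\<in>{..<n}. X i x) - real (card {..<n}) * measure G A\<bar>}
        \<le> 2 * exp (- 2 * (real n * c)\<^sup>2 / (real (card {..<n}) * (1 - 0)\<^sup>2))"
    using H.Hoeffding_ineq_abs_ge[of "real n * c"] n c by (simp add: lessThan_empty_iff)
  also have "- 2 * (real n * c)\<^sup>2 / (real (card {..<n}) * (1 - 0)\<^sup>2) = real n * (-2 * c\<^sup>2)"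
    using n by (simp add: power2_eq_square field_simps)
  also have "exp (real n * (-2 * c\<^sup>2)) = exp (-2 * c\<^sup>2) ^ n"
    by (rule exp_of_nat_mult)
  also have "{x \<in> space (iid G). real n * c \<le> \<bar>(\<Sum>i\<in>{..<n}. X i x) - real (card {..<n}) * measure G A\<bar>}
      = {\<omega>. c \<le> \<bar>real (card {i\<in>{..<n}. \<omega> i \<in> A}) / real n - measure G A\<bar>}"
  proof -
    have "real n * c \<le> \<bar>y - real n * m\<bar> \<longleftrightarrow> c \<le> \<bar>y / real n - m\<bar>" for y m
    proof -
      have "\<bar>y - real n * m\<bar> = real n * \<bar>y / real n - m\<bar>"
        using n by (simp add: field_simps abs_mult[symmetric])
      then show ?thesis using n by simp
    qed
    then show ?thesis by (auto simp: space_iid[OF G] X_def sum_ind_card)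
  qed
  finally show ?thesis .
qed

lemma slln_count:
  assumes G: "real_distribution G" and A: "A \<in> sets borel"
  shows "AE \<omega> in iid G. (\<lambda>n. real (card {i\<in>{..<n}. \<omega> i \<in> A}) / real n) \<longlonglongrightarrow> measure G A"
proof -
  interpret P: prob_space "iid G" by (rule iid_prob[OF G])
  define B where "B = (\<lambda>c n. {\<omega>::nat\<Rightarrow>real. c \<le> \<bar>real (card {i\<in>{..<n}. \<omega> i \<in> A}) / real n - measure G A\<bar>})"
  have Bm: "B c n \<in> sets (iid G)" for c n
  proof -
    have "(\<lambda>\<omega>::nat\<Rightarrow>real. real (card {i\<in>{..<n}. \<omega> i \<in> A})) \<in> borel_measurable (iid G)"
      by (rule meas_iid[OF G card_le_meas[OF A]])
    then have "(\<lambda>\<omega>::nat\<Rightarrow>real. \<bar>real (card {i\<in>{..<n}. \<omega> i \<in> A}) / real n - measure G A\<bar>) \<in> borel_measurable (iid G)"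
      by measurable
    then have "{\<omega> \<in> space (iid G). c \<le> \<bar>real (card {i\<in>{..<n}. \<omega> i \<in> A}) / real n - measure G A\<bar>} \<in> sets (iid G)"
      by measurable
    then show ?thesis by (simp add: B_def space_iid[OF G])
  qed
  have ev: "AE \<omega> in iid G. eventually (\<lambda>n. \<bar>real (card {i\<in>{..<n}. \<omega> i \<in> A}) / real n - measure G A\<bar> < c) sequentially"
    if c: "c > 0" for c
  proof -
    have "AE \<omega> in iid G. eventually (\<lambda>n. \<omega> \<in> space (iid G) - B c n) sequentially"
    proof (rule borel_cantelli_AE1)
      show "B c n \<in> sets (iid G)" for n by (rule Bm)
      show "emeasure (iid G) (B c n) < \<infinity>" for n by (simp add: P.emeasure_eq_measure)
      show "summable (\<lambda>n. measure (iid G) (B c n))"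
      proof (rule summable_comparison_test_ev)
        show "eventually (\<lambda>n. norm (measure (iid G) (B c n)) \<le> 2 * exp (-2 * c\<^sup>2) ^ n) sequentially"
          using eventually_gt_at_top[of 0]
          by eventually_elim (use hoeffding_count[OF G A _, of _ c] c in \<open>auto simp: B_def\<close>)
        show "summable (\<lambda>n. 2 * exp (-2 * c\<^sup>2) ^ n)"
          using c by (intro summable_mult summable_geometric) auto
      qed
    qed
    then show ?thesis by eventually_elim (auto simp: B_def not_le elim!: eventually_mono)
  qed
  have "AE \<omega> in iid G. \<forall>m::nat. eventually (\<lambda>n. \<bar>real (card {i\<in>{..<n}. \<omega> i \<in> A}) / real n - measure G A\<bar> < inverse (real (Suc m))) sequentially"
    by (subst AE_all_countable) (intro allI ev, simp)
  then show ?thesis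
  proof eventually_elim
    case (elim \<omega>)
    show ?case
    proof (rule LIMSEQ_I)
      fix r :: real assume r: "r > 0"
      obtain m where m: "inverse (real (Suc m)) < r" using reals_Archimedean[OF r] by blast
      have "eventually (\<lambda>n. \<bar>real (card {i\<in>{..<n}. \<omega> i \<in> A}) / real n - measure G A\<bar> < r) sequentially"
        using elim[rule_format, of m] by eventually_elim (use m in auto)
      then show "\<exists>no. \<forall>n\<ge>no. norm (real (card {i\<in>{..<n}. \<omega> i \<in> A}) / real n - measure G A) < r"
        by (simp add: eventually_sequentially)
    qed
  qed
qed

lemma card_as_sum_real: "real (card {i\<in>{..<n::nat}. v i}) = (\<Sum>i<n. if v i then 1 else 0 :: real)"
proof -
  have "(\<Sum>i<n. if v i then 1 else 0 :: real) = (\<Sum>i\<in>{i\<in>{..<n}. v i}. 1)"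
    by (rule sum.mono_neutral_cong_right) auto
  then show ?thesis by simp
qed

lemma card_set_meas:
  "{v \<in> space (PiM {..<n::nat} (\<lambda>_. count_space (UNIV::bool set))). P (card {i\<in>{..<n}. v i})}
     \<in> sets (PiM {..<n} (\<lambda>_. count_space UNIV))"
proof -
  let ?N = "PiM {..<n::nat} (\<lambda>_. count_space (UNIV::bool set))"
  define g where "g = (\<lambda>v::nat\<Rightarrow>bool. (\<Sum>i<n. if v i then 1 else 0 :: real))"
  have gm: "g \<in> borel_measurable ?N" unfolding g_def by measurable
  have cnt: "countable (real ` {z. P z})" by simp
  have bor: "real ` {z. P z} \<in> sets borel"
    by (rule sets.countable[OF _ cnt]) auto
  have "{v \<in> space ?N. P (card {i\<in>{..<n}. v i})} = g -` (real ` {z. P z}) \<inter> space ?N"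
    by (auto simp: g_def card_as_sum_real[symmetric])
  also have "\<dots> \<in> sets ?N" by (rule measurable_sets[OF gm bor])
  finally show ?thesis .
qed

lemma distr_bern_iid:
  assumes G: "real_distribution G" and A: "A \<in> sets borel"
  shows "distr (iid G) (count_space UNIV) (\<lambda>\<omega>. \<omega> i \<in> A) = measure_pmf (bernoulli_pmf (measure G A))"
proof -
  interpret RG: real_distribution G by (rule G)
  have mA: "(\<lambda>x::real. x \<in> A) \<in> measurable borel (count_space UNIV)" using A by measurable
  have "distr (iid G) (count_space UNIV) (\<lambda>\<omega>. \<omega> i \<in> A) = distr (distr (iid G) borel (\<lambda>\<omega>. \<omega> i)) (count_space UNIV) (\<lambda>x. x \<in> A)"
    by (subst distr_distr) (auto simp: o_def intro!: meas_iid_gen[OF G] mA)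
  also have "\<dots> = distr G (count_space UNIV) (\<lambda>x. x \<in> A)" by (simp add: iid_component[OF G])
  also have "\<dots> = measure_pmf (bernoulli_pmf (measure G A))"
  proof (rule measure_eqI_countable[where A=UNIV])
    fix b :: bool
    have q: "0 \<le> measure G A" "measure G A \<le> 1" by auto
    show "emeasure (distr G (count_space UNIV) (\<lambda>x. x \<in> A)) {b} = emeasure (measure_pmf (bernoulli_pmf (measure G A))) {b}"
    proof (cases b)
      case True
      have "emeasure (distr G (count_space UNIV) (\<lambda>x. x \<in> A)) {b} = emeasure G A"
        using True A by (subst emeasure_distr) (auto intro!: mA arg_cong[where f="emeasure G"])
      then show ?thesis using True q by (simp add: emeasure_pmf_single RG.emeasure_eq_measure)
    next
      case False
      have "emeasure (distr G (count_space UNIV) (\<lambda>x. x \<in> A)) {b} = emeasure G (UNIV - A)"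
        using False A by (subst emeasure_distr) (auto intro!: mA arg_cong[where f="emeasure G"])
      also have "\<dots> = ennreal (1 - measure G A)"
        using A RG.prob_compl[of A] by (simp add: RG.emeasure_eq_measure Compl_eq_Diff_UNIV)
      finally show ?thesis using False q by (simp add: emeasure_pmf_single)
    qed
  qed auto
  finally show ?thesis .
qed

lemma iid_binomial:
  assumes G: "real_distribution G" and A: "A \<in> sets borel"
  shows "measure (iid G) {\<omega>. P (card {i\<in>{..<n}. \<omega> i \<in> A})} = measure_pmf.prob (binomial_pmf n (measure G A)) {z. P z}"
proof -
  interpret RG: real_distribution G by (rule G)
  interpret P: prob_space "iid G" by (rule iid_prob[OF G])
  define q where "q = measure G A"
  have q: "q \<in> {0..1}" by (auto simp: q_def)
  show ?thesis
  proof (cases "n = 0")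
    case True
    then show ?thesis using q
      by (cases "P 0") (auto simp: binomial_pmf_0 q_def[symmetric] space_iid[OF G] P.prob_space[symmetric])
  next
    case False
    let ?N = "PiM {..<n::nat} (\<lambda>_. count_space (UNIV::bool set))"
    let ?B = "measure_pmf (bernoulli_pmf q)"
    define coins where "coins = Pi_pmf {..<n} False (\<lambda>_. bernoulli_pmf q)"
    define S where "S = {v \<in> space ?N. P (card {i\<in>{..<n}. v i})}"
    have S: "S \<in> sets ?N" unfolding S_def by (rule card_set_meas)
    have ne: "{..<n} \<noteq> {}" using False by auto
    have D1: "distr (measure_pmf coins) ?N (\<lambda>f. restrict f {..<n}) = PiM {..<n} (\<lambda>_. ?B)"
    proof -
      have ind: "prob_space.indep_vars (measure_pmf coins) (\<lambda>_. count_space UNIV) (\<lambda>x f. f x) {..<n}"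
        unfolding coins_def by (rule indep_vars_Pi_pmf) simp
      have "distr (measure_pmf coins) ?N (\<lambda>x. \<lambda>i\<in>{..<n}. x i) = PiM {..<n} (\<lambda>i. distr (measure_pmf coins) (count_space UNIV) (\<lambda>f. f i))"
        using ind by (subst (asm) prob_space.indep_vars_iff_distr_eq_PiM'[OF measure_pmf.prob_space_axioms ne]) auto
      also have "\<dots> = PiM {..<n} (\<lambda>_. ?B)"
      proof (rule PiM_cong)
        fix i assume i: "i \<in> {..<n}"
        have "distr (measure_pmf coins) (count_space UNIV) (\<lambda>f. f i) = measure_pmf (map_pmf (\<lambda>f. f i) coins)"
          by (simp add: map_pmf_rep_eq)
        also have "map_pmf (\<lambda>f. f i) coins = bernoulli_pmf q" using i by (simp add: coins_def Pi_pmf_component)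
        finally show "distr (measure_pmf coins) (count_space UNIV) (\<lambda>f. f i) = ?B" .
      qed simp
      finally show ?thesis by (simp add: restrict_def)
    qed
    define V where "V = (\<lambda>\<omega>::nat\<Rightarrow>real. \<lambda>i\<in>{..<n}. \<omega> i \<in> A)"
    have D2: "distr (iid G) ?N V = PiM {..<n} (\<lambda>_. ?B)"
    proof -
      have mA: "(\<lambda>x::real. x \<in> A) \<in> measurable borel (count_space UNIV)" using A by measurable
      have ind: "P.indep_vars (\<lambda>_. count_space UNIV) (\<lambda>i \<omega>. \<omega> i \<in> A) {..<n}"
      proof -
        have "P.indep_vars (\<lambda>_. count_space UNIV) (\<lambda>i \<omega>. (\<lambda>x. x \<in> A) ((\<lambda>i \<omega>. \<omega> i) i \<omega>)) UNIV"
          by (rule P.indep_vars_compose2[OF iid_indep[OF G]]) (rule mA)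
        then show ?thesis by (rule P.indep_vars_subset) auto
      qed
      have rv: "(\<lambda>\<omega>::nat\<Rightarrow>real. \<omega> i \<in> A) \<in> measurable (iid G) (count_space UNIV)" for i
        by (rule meas_iid_gen[OF G]) (use A in measurable)
      have "distr (iid G) ?N (\<lambda>x. \<lambda>i\<in>{..<n}. x i \<in> A) = PiM {..<n} (\<lambda>i. distr (iid G) (count_space UNIV) (\<lambda>\<omega>. \<omega> i \<in> A))"
        using ind by (subst (asm) P.indep_vars_iff_distr_eq_PiM'[OF ne]) (auto simp: rv)
      also have "\<dots> = PiM {..<n} (\<lambda>_. ?B)"
        by (rule PiM_cong) (auto simp: distr_bern_iid[OF G A] q_def)
      finally show ?thesis by (simp add: V_def)
    qed
    have Vm: "V \<in> measurable (iid G) ?N"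
    proof -
      have "(\<lambda>x. \<lambda>i\<in>{..<n}. x i \<in> A) \<in> measurable (iid G) ?N"
        by (rule meas_iid_gen[OF G]) (use A in measurable)
      then show ?thesis by (simp add: V_def)
    qed
    have resm: "(\<lambda>f. restrict f {..<n}) \<in> measurable (measure_pmf coins) ?N" by (simp add: space_PiM)
    have pre: "(\<lambda>f. restrict f {..<n}) -` S \<inter> space (measure_pmf coins) = {f. P (card {i\<in>{..<n}. f i})}"
    proof -
      have cR: "{i. i < n \<and> restrict f {..<n} i} = {i. i < n \<and> f i}" for f :: "nat \<Rightarrow> bool" by auto
      have cR2: "{i. (i < n \<longrightarrow> f i) \<and> i < n} = {i. i < n \<and> f i}" for f :: "nat \<Rightarrow> bool" by auto
      show ?thesis by (auto simp: S_def cR cR2 space_PiM)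
    qed
    have cV: "{i. i < n \<and> V \<omega> i} = {i. i < n \<and> \<omega> i \<in> A}" for \<omega> by (auto simp: V_def)
    have Vsp: "V \<omega> \<in> space ?N" for \<omega> by (auto simp: V_def space_PiM)
    have "{\<omega>. P (card {i\<in>{..<n}. \<omega> i \<in> A})} = V -` S \<inter> space (iid G)"
      using Vsp by (auto simp: S_def cV space_iid[OF G])
    then have "measure (iid G) {\<omega>. P (card {i\<in>{..<n}. \<omega> i \<in> A})} = measure (iid G) (V -` S \<inter> space (iid G))"
      by simp
    also have "\<dots> = measure (distr (iid G) ?N V) S" by (rule measure_distr[OF Vm S, symmetric])
    also have "\<dots> = measure (distr (measure_pmf coins) ?N (\<lambda>f. restrict f {..<n})) S" by (simp add: D1 D2)
    also have "\<dots> = measure (measure_pmf coins) ((\<lambda>f. restrict f {..<n}) -` S \<inter> space (measure_pmf coins))"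
      by (rule measure_distr[OF resm S])
    also have "\<dots> = measure_pmf.prob coins {f. P (card {i\<in>{..<n}. f i})}"
      by (simp only: pre)
    also have "\<dots> = measure_pmf.prob (map_pmf (\<lambda>f. card {x\<in>{..<n}. f x}) coins) {z. P z}"
      by simp
    also have "map_pmf (\<lambda>f. card {x\<in>{..<n}. f x}) coins = binomial_pmf n q"
      unfolding coins_def by (rule binomial_pmf_altdef'[symmetric]) (use q in auto)
    finally show ?thesis by (simp add: q_def)
  qed
qed

lemma limsup_meas:
  assumes [measurable]: "\<And>n. g n \<in> borel_measurable M"
  shows "(\<lambda>\<omega>. limsup (\<lambda>n. ereal (g n \<omega>))) \<in> borel_measurable M"
  unfolding limsup_INF_SUP by measurable

lemma cdf_as_measure: "measure G {..t} = cdf G t" by (simp add: cdf_def)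

lemma ostat_ev_le:
  assumes G: "real_distribution G"
    and jn: "(\<lambda>n. real (j n) / real n) \<longlonglongrightarrow> r"
    and rng: "eventually (\<lambda>n. 1 \<le> j n \<and> j n \<le> n) sequentially"
    and t: "cdf G t > r"
  shows "AE \<omega> in iid G. eventually (\<lambda>n. ostat (sample \<omega> n) (j n) \<le> t) sequentially"
proof -
  have "AE \<omega> in iid G. (\<lambda>n. real (card {i\<in>{..<n}. \<omega> i \<in> {..t}}) / real n) \<longlonglongrightarrow> measure G {..t}"
    by (rule slln_count[OF G]) simp
  then show ?thesis
  proof eventually_elim
    case (elim \<omega>)
    define m where "m = (r + cdf G t) / 2"
    have m: "r < m" "m < cdf G t" using t by (auto simp: m_def)
    have e1: "eventually (\<lambda>n. real (card {i\<in>{..<n}. \<omega> i \<in> {..t}}) / real n > m) sequentially"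
      using order_tendstoD(1)[OF elim] m by (simp add: cdf_as_measure)
    have e2: "eventually (\<lambda>n. real (j n) / real n < m) sequentially"
      using order_tendstoD(2)[OF jn m(1)] .
    show ?case using e1 e2 rng eventually_gt_at_top[of 0]
    proof eventually_elim
      case (elim n)
      have "real (j n) / real n < real (card {i\<in>{..<n}. \<omega> i \<in> {..t}}) / real n" using elim by linarith
      then have "real (j n) < real (card {i\<in>{..<n}. \<omega> i \<in> {..t}})" using elim(4)
        by (simp add: divide_less_cancel)
      then have "j n \<le> card {i\<in>{..<n}. \<omega> i \<le> t}" by simp
      then show ?case using ostat_le_iff_card[of "j n" n \<omega> t] elim(3) by simp
    qed
  qed
qed

lemma ostat_ev_gt:
  assumes G: "real_distribution G"
    and jn: "(\<lambda>n. real (j n) / real n) \<longlonglongrightarrow> r"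
    and rng: "eventually (\<lambda>n. 1 \<le> j n \<and> j n \<le> n) sequentially"
    and t: "cdf G t < r"
  shows "AE \<omega> in iid G. eventually (\<lambda>n. ostat (sample \<omega> n) (j n) > t) sequentially"
proof -
  have "AE \<omega> in iid G. (\<lambda>n. real (card {i\<in>{..<n}. \<omega> i \<in> {..t}}) / real n) \<longlonglongrightarrow> measure G {..t}"
    by (rule slln_count[OF G]) simp
  then show ?thesis
  proof eventually_elim
    case (elim \<omega>)
    define m where "m = (r + cdf G t) / 2"
    have m: "m < r" "cdf G t < m" using t by (auto simp: m_def)
    have e1: "eventually (\<lambda>n. real (card {i\<in>{..<n}. \<omega> i \<in> {..t}}) / real n < m) sequentially"
      using order_tendstoD(2)[OF elim] m by (simp add: cdf_as_measure)
    have e2: "eventually (\<lambda>n. real (j n) / real n > m) sequentially"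
      using order_tendstoD(1)[OF jn m(1)] .
    show ?case using e1 e2 rng eventually_gt_at_top[of 0]
    proof eventually_elim
      case (elim n)
      have "real (card {i\<in>{..<n}. \<omega> i \<in> {..t}}) / real n < real (j n) / real n" using elim by linarith
      then have "real (card {i\<in>{..<n}. \<omega> i \<in> {..t}}) < real (j n)" using elim(4)
        by (simp add: divide_less_cancel)
      then have "\<not> j n \<le> card {i\<in>{..<n}. \<omega> i \<le> t}" by simp
      then show ?case using ostat_le_iff_card[of "j n" n \<omega> t] elim(3) by simp
    qed
  qed
qed

lemma esssup_ge_AE:
  assumes P: "prob_space M" and m: "f \<in> borel_measurable M" and ae: "AE x in M. c \<le> f x"
  shows "c \<le> esssup M (f :: _ \<Rightarrow> ereal)"
proof -
  interpret prob_space M by (rule P)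
  have "esssup M (\<lambda>x. c) \<le> esssup M f" by (rule esssup_AE_mono) (use ae in auto)
  moreover have "esssup M (\<lambda>x. c) = c" by (rule esssup_const) (simp add: emeasure_space_1)
  ultimately show ?thesis by simp
qed

lemma esssup_ge_pos:
  assumes P: "prob_space M" and m: "f \<in> borel_measurable M" and pos: "emeasure M {x\<in>space M. c \<le> f x} > 0"
  shows "c \<le> esssup M (f :: _ \<Rightarrow> ereal)"
proof (rule ccontr)
  assume "\<not> c \<le> esssup M f"
  then have lt: "esssup M f < c" by simp
  have "AE x in M. f x \<le> esssup M f" by (rule esssup_AE)
  then have "AE x in M. \<not> c \<le> f x" by eventually_elim (use lt in auto)
  then have "emeasure M {x\<in>space M. c \<le> f x} = 0"
    by (subst (asm) AE_iff_measurable[OF _ refl]) (use m in auto)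
  then show False using pos by simp
qed

lemma limsup_ge_frequently:
  assumes "frequently (\<lambda>n. c \<le> X n) sequentially"
  shows "c \<le> limsup (X :: nat \<Rightarrow> ereal)"
proof -
  have "c \<le> (SUP m\<in>{n..}. X m)" for n
  proof -
    obtain m where "m \<ge> n" "c \<le> X m" using assms unfolding frequently_sequentially by blast
    then show ?thesis by (meson SUP_upper atLeast_iff order_trans)
  qed
  then show ?thesis unfolding limsup_INF_SUP by (rule INF_greatest)
qed

locale mainctx = symF F f \<theta> for F f \<theta> +
  fixes \<alpha> \<epsilon> :: real and k :: "nat \<Rightarrow> nat"
  assumes \<alpha>_range: "0 < \<alpha>" "\<alpha> < 1"
    and \<epsilon>_range: "0 \<le> \<epsilon>" "\<epsilon> < 1/2"
    and k_argmin: "\<forall>n\<ge>1. \<forall>j. \<bar>alpha_star n (k n) \<epsilon> - \<alpha>\<bar> \<le> \<bar>alpha_star n j \<epsilon> - \<alpha>\<bar>"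
begin

abbreviation "pp \<equiv> (1 - \<epsilon>) / 2"

definition len :: "(nat \<Rightarrow> real) \<Rightarrow> ereal" where
  "len \<omega> = limsup (\<lambda>n. ereal (ostat (sample \<omega> n) (n - k n) - ostat (sample \<omega> n) (k n + 1)))"

lemma pp_range: "1/4 < pp" "pp \<le> 1/2" using \<epsilon>_range by auto

lemma kr: "(\<lambda>n. real (k n) / real n) \<longlonglongrightarrow> pp"
  using k_ratio[of \<epsilon> \<alpha> k] \<epsilon>_range \<alpha>_range k_argmin by simp

lemma kev: "eventually (\<lambda>n. k n < n) sequentially"
proof -
  have "eventually (\<lambda>n. real (k n) / real n < 1) sequentially"
    using order_tendstoD(2)[OF kr] pp_range by simp
  then show ?thesis using eventually_gt_at_top[of 0]
    by eventually_elim (simp add: divide_less_eq)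
qed

lemma jb: "(\<lambda>n. real (n - k n) / real n) \<longlonglongrightarrow> 1 - pp"
proof -
  have "(\<lambda>n. 1 - real (k n) / real n) \<longlonglongrightarrow> 1 - pp" by (intro tendsto_intros kr)
  moreover have "eventually (\<lambda>n. 1 - real (k n) / real n = real (n - k n) / real n) sequentially"
    using kev eventually_gt_at_top[of 0] by eventually_elim (simp add: of_nat_diff field_simps)
  ultimately show ?thesis by (rule Lim_transform_eventually)
qed

lemma ja: "(\<lambda>n. real (k n + 1) / real n) \<longlonglongrightarrow> pp"
proof -
  have "(\<lambda>n. real (k n) / real n + inverse (real n)) \<longlonglongrightarrow> pp + 0"
    by (intro tendsto_intros kr LIMSEQ_inverse_real_of_nat_add_minus tendsto_inverse_0_at_top filterlim_real_sequentially)
  moreover have "eventually (\<lambda>n. real (k n) / real n + inverse (real n) = real (k n + 1) / real n) sequentially"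
    using eventually_gt_at_top[of 0] by eventually_elim (simp add: field_simps)
  ultimately show ?thesis using Lim_transform_eventually by fastforce
qed

lemma jb_rng: "eventually (\<lambda>n. 1 \<le> n - k n \<and> n - k n \<le> n) sequentially"
  using kev by eventually_elim auto

lemma ja_rng: "eventually (\<lambda>n. 1 \<le> k n + 1 \<and> k n + 1 \<le> n) sequentially"
  using kev by eventually_elim auto

lemma b_le: "real_distribution G \<Longrightarrow> cdf G t > 1 - pp \<Longrightarrow>
  AE \<omega> in iid G. eventually (\<lambda>n. ostat (sample \<omega> n) (n - k n) \<le> t) sequentially"
  by (rule ostat_ev_le[OF _ jb jb_rng])

lemma b_gt: "real_distribution G \<Longrightarrow> cdf G t < 1 - pp \<Longrightarrow>
  AE \<omega> in iid G. eventually (\<lambda>n. ostat (sample \<omega> n) (n - k n) > t) sequentially"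
  by (rule ostat_ev_gt[OF _ jb jb_rng])

lemma a_le: "real_distribution G \<Longrightarrow> cdf G t > pp \<Longrightarrow>
  AE \<omega> in iid G. eventually (\<lambda>n. ostat (sample \<omega> n) (k n + 1) \<le> t) sequentially"
  by (rule ostat_ev_le[OF _ ja ja_rng])

lemma a_gt: "real_distribution G \<Longrightarrow> cdf G t < pp \<Longrightarrow>
  AE \<omega> in iid G. eventually (\<lambda>n. ostat (sample \<omega> n) (k n + 1) > t) sequentially"
  by (rule ostat_ev_gt[OF _ ja ja_rng])

lemma len_meas: "real_distribution G \<Longrightarrow> len \<in> borel_measurable (iid G)"
proof -
  assume G: "real_distribution G"
  have "(\<lambda>\<omega>. ostat (sample \<omega> n) (n - k n) - ostat (sample \<omega> n) (k n + 1)) \<in> borel_measurable (iid G)" for n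
    by (rule meas_iid[OF G]) (intro borel_measurable_diff ostat_meas)
  then show ?thesis unfolding len_def[abs_def] by (rule limsup_meas)
qed

lemma len_le:
  assumes "AE \<omega> in M. eventually (\<lambda>n. ostat (sample \<omega> n) (n - k n) \<le> t) sequentially"
    and "AE \<omega> in M. eventually (\<lambda>n. ostat (sample \<omega> n) (k n + 1) > s) sequentially"
  shows "AE \<omega> in M. len \<omega> \<le> ereal (t - s)"
  using assms
proof eventually_elim
  case (elim \<omega>)
  have "eventually (\<lambda>n. ereal (ostat (sample \<omega> n) (n - k n) - ostat (sample \<omega> n) (k n + 1)) \<le> ereal (t - s)) sequentially"
    using elim(1,2) by eventually_elim simp
  then show ?case unfolding len_def by (rule Limsup_bounded)
qed

lemma len_ge:
  assumes "AE \<omega> in M. eventually (\<lambda>n. ostat (sample \<omega> n) (n - k n) > t) sequentially"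
    and "AE \<omega> in M. eventually (\<lambda>n. ostat (sample \<omega> n) (k n + 1) \<le> s) sequentially"
  shows "AE \<omega> in M. ereal (t - s) \<le> len \<omega>"
  using assms
proof eventually_elim
  case (elim \<omega>)
  have "eventually (\<lambda>n. ereal (t - s) \<le> ereal (ostat (sample \<omega> n) (n - k n) - ostat (sample \<omega> n) (k n + 1))) sequentially"
    using elim(1,2) by eventually_elim simp
  then show ?case unfolding len_def by (intro le_Limsup) simp_all
qed

end

lemma cont_right_ge:
  fixes g :: "real \<Rightarrow> real"
  assumes "isCont g x" "d > 0" "\<forall>y. x < y \<and> y < x + d \<longrightarrow> c \<le> g y"
  shows "c \<le> g x"
proof (rule tendsto_lowerbound)
  show "(g \<longlongrightarrow> g x) (at_right x)"
    using assms(1) unfolding isCont_def by (rule tendsto_mono[OF at_le, rotated]) simp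
  show "eventually (\<lambda>y. c \<le> g y) (at_right x)"
    unfolding eventually_at_right_field using assms(2,3) by (intro exI[of _ "x + d"]) auto
qed simp

lemma cont_left_le:
  fixes g :: "real \<Rightarrow> real"
  assumes "isCont g x" "d > 0" "\<forall>y. x - d < y \<and> y < x \<longrightarrow> g y \<le> c"
  shows "g x \<le> c"
proof (rule tendsto_upperbound)
  show "(g \<longlongrightarrow> g x) (at_left x)"
    using assms(1) unfolding isCont_def by (rule tendsto_mono[OF at_le, rotated]) simp
  show "eventually (\<lambda>y. g y \<le> c) (at_left x)"
    unfolding eventually_at_left_field using assms(2,3) by (intro exI[of _ "x - d"]) auto
qed simp

context mainctx begin

interpretation RD: real_distribution F by (rule F_distr)

lemma Lstar_bound:
  assumes \<delta>: "0 \<le> \<delta>" "\<delta> < pp" and G: "real_distribution G" and H: "real_distribution H"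
    and GH: "\<forall>x. cdf G x = (1 - \<delta>) * Fc x + \<delta> * cdf H x"
  shows "AE \<omega> in iid G. len \<omega> \<le> ereal (Q ((1 + \<epsilon>) / (2 * (1 - \<delta>))) - Q ((1 - \<epsilon>) / (2 * (1 - \<delta>))))"
proof -
  interpret RG: real_distribution G by (rule G)
  interpret RH: real_distribution H by (rule H)
  define pu where "pu = (1 + \<epsilon>) / 2"
  define c1 where "c1 = (1 + \<epsilon>) / (2 * (1 - \<delta>))"
  define c1w where "c1w = (1 - \<epsilon>) / (2 * (1 - \<delta>))"
  define w where "w = c1 - c1w"
  define c0 where "c0 = 1 - c1"
  define Ls where "Ls = Q c1 - Q c1w"
  have d1: "1 - \<delta> > 0" using \<delta> pp_range by simp
  have e1: "(1 - \<delta>) * c1 = pu" using d1 by (simp add: c1_def pu_def field_simps)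
  have e0: "(1 - \<delta>) * c0 = pp - \<delta>" using d1 e1 by (simp add: c0_def pu_def algebra_simps)
  have ew: "(1 - \<delta>) * w = \<epsilon>"
  proof -
    have "(1 - \<delta>) * c1w = pp" using d1 by (simp add: c1w_def field_simps)
    then show ?thesis using e1 by (simp add: w_def pu_def algebra_simps)
  qed
  have c0pos: "0 < c0"
  proof -
    have "(1 - \<delta>) * c0 > 0" using e0 \<delta> by simp
    then show ?thesis using d1 by (simp add: zero_less_mult_iff)
  qed
  have c01: "c0 + c1 = 1" by (simp add: c0_def)
  have w0: "0 \<le> w"
  proof -
    have "(1 - \<delta>) * w \<ge> 0" using ew \<epsilon>_range by simp
    then show ?thesis using d1 by (simp add: zero_le_mult_iff)
  qed
  have c0w: "c0 + w \<le> c1"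
  proof -
    have "(1 - \<delta>) * (c0 + w) \<le> (1 - \<delta>) * c1"
      using e0 e1 ew \<delta> by (simp add: distrib_left pu_def) argo
    then show ?thesis using d1 by simp
  qed
  have c1w_eq: "c1 - w = c1w" by (simp add: w_def)
  have c1lt: "c1 < 1" using c0pos c01 by simp
  have c1wpos: "0 < c1w" using c0pos c0w c1w_eq by simp
  have Ls0: "Ls \<ge> 0" using Q_mono[of c1w c1] c1wpos c1lt c1w_eq w0 by (simp add: Ls_def)
  have H1: "cdf H x \<le> 1" "0 \<le> cdf H x" for x by (auto simp: RH.cdf_bounded_prob RH.cdf_nonneg)
  have Hmono: "x \<le> y \<Longrightarrow> cdf H x \<le> cdf H y" for x y by (rule RH.cdf_nondecreasing)
  define Su where "Su = {t. cdf G t > pu}"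
  define Sl where "Sl = {s. cdf G s < pp}"
  have pu1: "pu < 1" "pp \<le> pu" "0 < pp" using \<epsilon>_range by (auto simp: pu_def)
  obtain tb where tb: "\<forall>x\<ge>tb. cdf G x > pu"
    using order_tendstoD(1)[OF RG.cdf_lim_at_top_prob pu1(1)] by (auto simp: eventually_at_top_linorder)
  obtain bb where bb: "\<forall>x\<le>bb. cdf G x < pp"
    using order_tendstoD(2)[OF RG.cdf_lim_at_bot pu1(3)] by (auto simp: eventually_at_bot_linorder)
  have Su_ne: "Su \<noteq> {}" using tb by (auto simp: Su_def)
  have Sl_ne: "Sl \<noteq> {}" using bb by (auto simp: Sl_def)
  have Su_bdd: "bdd_below Su"
  proof (rule bdd_belowI[of _ bb])
    fix x assume "x \<in> Su"
    then have "cdf G x > pu" by (simp add: Su_def)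
    then show "bb \<le> x" using bb pu1 by (meson not_le order.strict_trans2 less_le_not_le)
  qed
  have Sl_bdd: "bdd_above Sl"
  proof (rule bdd_aboveI[of _ tb])
    fix x assume "x \<in> Sl"
    then have "cdf G x < pp" by (simp add: Sl_def)
    then show "x \<le> tb" using tb pu1 by (meson not_le order.strict_trans1 less_le_not_le)
  qed
  define u where "u = Inf Su"
  define l where "l = Sup Sl"
  have i: "cdf G s \<ge> pp" if "s > l" for s
  proof (rule ccontr)
    assume "\<not> cdf G s \<ge> pp"
    then have "s \<in> Sl" by (simp add: Sl_def)
    then have "s \<le> l" unfolding l_def by (rule cSup_upper[OF _ Sl_bdd])
    then show False using that by simp
  qed
  have ii: "cdf G t \<le> pu" if "t < u" for t
  proof (rule ccontr)
    assume "\<not> cdf G t \<le> pu"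
    then have "t \<in> Su" by (simp add: Su_def)
    then have "u \<le> t" unfolding u_def by (rule cInf_lower[OF _ Su_bdd])
    then show False using that by simp
  qed
  have LS: "u - l \<le> Ls"
  proof (cases "l < u")
    case False then show ?thesis using Ls0 by simp
  next
    case True
    have Fl: "c0 \<le> Fc l"
    proof (rule cont_right_ge[where g=Fc and x=l and d=1])
      show "isCont Fc l" using F_cont by simp
      show "\<forall>y. l < y \<and> y < l + 1 \<longrightarrow> c0 \<le> Fc y"
      proof (intro allI impI)
        fix y assume y: "l < y \<and> y < l + 1"
        have "pp \<le> (1 - \<delta>) * Fc y + \<delta> * cdf H y" using i[of y] y GH by simp
        also have "\<dots> \<le> (1 - \<delta>) * Fc y + \<delta>" using H1[of y] \<delta> by (simp add: mult_left_le)
        finally have h: "pp \<le> (1 - \<delta>) * Fc y + \<delta>" .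
        have "(1 - \<delta>) * c0 \<le> (1 - \<delta>) * Fc y" unfolding e0 using h by linarith
        then show "c0 \<le> Fc y" using d1 by simp
      qed
    qed simp
    have Fu: "Fc u \<le> c1"
    proof (rule cont_left_le[where g=Fc and x=u and d=1])
      show "isCont Fc u" using F_cont by simp
      show "\<forall>y. u - 1 < y \<and> y < u \<longrightarrow> Fc y \<le> c1"
      proof (intro allI impI)
        fix y assume y: "u - 1 < y \<and> y < u"
        have "(1 - \<delta>) * Fc y \<le> (1 - \<delta>) * Fc y + \<delta> * cdf H y" using H1[of y] \<delta> by simp
        also have "\<dots> \<le> pu" using ii[of y] y GH by simp
        finally have "(1 - \<delta>) * Fc y \<le> (1 - \<delta>) * c1" unfolding e1 .
        then show "Fc y \<le> c1" using d1 by simp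
      qed
    qed simp
    have mid: "Fc t - Fc s \<le> w" if "l < s" "s < t" "t < u" for s t
    proof -
      have "(1 - \<delta>) * (Fc t - Fc s) \<le> (1 - \<delta>) * (Fc t - Fc s) + \<delta> * (cdf H t - cdf H s)"
        using Hmono[of s t] that \<delta> by simp
      also have "\<dots> = cdf G t - cdf G s" unfolding GH[rule_format, of t] GH[rule_format, of s] by (simp add: algebra_simps)
      also have "\<dots> \<le> pu - pp" using i[of s] ii[of t] that by argo
      also have "\<dots> = (1 - \<delta>) * w" using ew by (simp add: pu_def field_simps)
      finally show ?thesis using d1 by simp
    qed
    have mid2: "Fc t - Fc l \<le> w" if "l < t" "t < u" for t
    proof -
      have "Fc t - w \<le> Fc l"
      proof (rule cont_right_ge[where g=Fc and x=l and d="t - l"])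
        show "isCont Fc l" using F_cont by simp
        show "\<forall>y. l < y \<and> y < l + (t - l) \<longrightarrow> Fc t - w \<le> Fc y"
          using mid[of _ t] that by force
      qed (use that in simp)
      then show ?thesis by simp
    qed
    have "Fc u - Fc l \<le> w"
    proof -
      have "Fc u \<le> w + Fc l"
      proof (rule cont_left_le[where g=Fc and x=u and d="u - l"])
        show "isCont Fc u" using F_cont by simp
        show "\<forall>y. u - (u - l) < y \<and> y < u \<longrightarrow> Fc y \<le> w + Fc l"
          using mid2 by force
      qed (use True in simp)
      then show ?thesis by simp
    qed
    then have "u - l \<le> Q c1 - Q (c1 - w)"
      using AK[OF c0pos c01 w0 c0w Fl Fu] by simp
    then show ?thesis by (simp add: Ls_def c1w_eq)
  qed
  have ev: "AE \<omega> in iid G. len \<omega> \<le> ereal (Ls + 2 * e)" if e: "e > 0" for e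
  proof -
    have "cdf G (u + e) > pu"
    proof -
      have "u < u + e" using e by simp
      then obtain t where t: "t \<in> Su" "t < u + e"
        unfolding u_def using cInf_less_iff[OF Su_ne Su_bdd] by blast
      then show ?thesis using RG.cdf_nondecreasing[of t "u + e"] by (auto simp: Su_def)
    qed
    then have A1: "AE \<omega> in iid G. eventually (\<lambda>n. ostat (sample \<omega> n) (n - k n) \<le> u + e) sequentially"
      by (intro b_le[OF G]) (simp add: pu_def, argo)
    have "cdf G (l - e) < pp"
    proof -
      have "l - e < l" using e by simp
      then obtain s where s: "s \<in> Sl" "l - e < s"
        unfolding l_def using less_cSup_iff[OF Sl_ne Sl_bdd] by blast
      then show ?thesis using RG.cdf_nondecreasing[of "l - e" s] by (auto simp: Sl_def)
    qed
    then have A2: "AE \<omega> in iid G. eventually (\<lambda>n. ostat (sample \<omega> n) (k n + 1) > l - e) sequentially"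
      by (intro a_gt[OF G])
    have "AE \<omega> in iid G. len \<omega> \<le> ereal (u + e - (l - e))" by (rule len_le[OF A1 A2])
    then show ?thesis
    proof eventually_elim
      case (elim \<omega>)
      have "u + e - (l - e) \<le> Ls + 2 * e" using LS by simp
      then show ?case using elim order_trans by fastforce
    qed
  qed
  have "AE \<omega> in iid G. \<forall>m::nat. len \<omega> \<le> ereal (Ls + 2 * inverse (real (Suc m)))"
    by (subst AE_all_countable) (intro allI ev, simp)
  then have "AE \<omega> in iid G. len \<omega> \<le> ereal Ls"
  proof eventually_elim
    case (elim \<omega>)
    show ?case
    proof (rule ereal_le_epsilon2)
      fix e :: real assume e: "e > 0"
      obtain m where m: "inverse (real (Suc m)) < e / 2" using reals_Archimedean[of "e/2"] e by auto
      have "len \<omega> \<le> ereal (Ls + 2 * inverse (real (Suc m)))" using elim by blast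
      also have "\<dots> \<le> ereal (Ls + e)" using m by simp
      finally show "len \<omega> \<le> ereal Ls + ereal e" by simp
    qed
  qed
  then show ?thesis by (simp add: Ls_def c1_def c1w_def)
qed

end

lemma mk_dist:
  fixes g :: "real \<Rightarrow> real"
  assumes mono: "\<And>x y. x \<le> y \<Longrightarrow> g x \<le> g y"
    and rc: "\<And>a. continuous (at_right a) g"
    and bot: "(g \<longlongrightarrow> 0) at_bot" and top: "(g \<longlongrightarrow> 1) at_top"
  shows "real_distribution (interval_measure g)" "cdf (interval_measure g) = g"
proof -
  show "real_distribution (interval_measure g)"
    by (rule real_distribution_interval_measure[OF mono rc bot top])
  show "cdf (interval_measure g) = g"
    by (rule ext) (simp add: cdf_def measure_interval_measure_Iic[OF mono rc bot])
qed

lemma ret_dist: "real_distribution (return borel (M::real))"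
proof -
  interpret prob_space "return borel M" by (rule prob_space_return) simp
  show ?thesis by unfold_locales simp
qed

lemma ret_cdf: "cdf (return borel (M::real)) x = (if M \<le> x then 1 else 0)"
  by (simp add: cdf_def measure_return indicator_def)

lemma mdc: "(a::real) \<noteq> 0 \<Longrightarrow> a * (x / a) = x" by simp

context mainctx begin

interpretation RD: real_distribution F by (rule F_distr)

definition Gs :: "real \<Rightarrow> real \<Rightarrow> real measure" where
  "Gs \<delta> M = interval_measure (\<lambda>x. (1 - \<delta>) * Fc x + \<delta> * cdf (return borel M) x)"

lemma Gs_props:
  assumes \<delta>: "0 \<le> \<delta>" "\<delta> \<le> 1"
  shows "real_distribution (Gs \<delta> M)"
    and "cdf (Gs \<delta> M) = (\<lambda>x. (1 - \<delta>) * Fc x + \<delta> * cdf (return borel M) x)"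
proof -
  interpret R: real_distribution "return borel M" by (rule ret_dist)
  let ?g = "\<lambda>x. (1 - \<delta>) * Fc x + \<delta> * cdf (return borel M) x"
  have mono: "?g x \<le> ?g y" if "x \<le> y" for x y
    using that \<delta> by (intro add_mono mult_left_mono RD.cdf_nondecreasing R.cdf_nondecreasing) auto
  have rc: "continuous (at_right a) ?g" for a
  proof -
    have "continuous (at_right a) Fc"
      using F_cont continuous_at_split by blast
    then show ?thesis by (intro continuous_intros R.cdf_is_right_cont)
  qed
  have bot: "(?g \<longlongrightarrow> 0) at_bot"
    using tendsto_add[OF tendsto_mult[OF tendsto_const RD.cdf_lim_at_bot] tendsto_mult[OF tendsto_const R.cdf_lim_at_bot], of "1 - \<delta>" \<delta>]
    by simp
  have top: "(?g \<longlongrightarrow> 1) at_top"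
    using tendsto_add[OF tendsto_mult[OF tendsto_const RD.cdf_lim_at_top_prob] tendsto_mult[OF tendsto_const R.cdf_lim_at_top_prob], of "1 - \<delta>" \<delta>]
    by simp
  show "real_distribution (Gs \<delta> M)" unfolding Gs_def by (rule mk_dist(1)[OF mono rc bot top])
  show "cdf (Gs \<delta> M) = ?g" unfolding Gs_def by (rule mk_dist(2)[OF mono rc bot top])
qed

lemma Gs_contam:
  assumes \<delta>: "0 \<le> \<delta>" "\<delta> \<le> 1"
  shows "Gs \<delta> M \<in> contam F \<delta>"
  unfolding contam_def using Gs_props[OF \<delta>] ret_dist by auto

lemma Gs_cdf:
  assumes \<delta>: "0 \<le> \<delta>" "\<delta> \<le> 1"
  shows "cdf (Gs \<delta> M) x = (1 - \<delta>) * Fc x + \<delta> * (if M \<le> x then 1 else 0)"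
  using Gs_props(2)[OF \<delta>] by (simp add: ret_cdf)

lemma Gs_atom:
  assumes \<delta>: "0 \<le> \<delta>" "\<delta> \<le> 1"
  shows "measure (Gs \<delta> M) {M} = \<delta>"
proof -
  interpret G: real_distribution "Gs \<delta> M" by (rule Gs_props(1)[OF \<delta>])
  have l1: "(cdf (Gs \<delta> M) \<longlongrightarrow> measure (Gs \<delta> M) {..<M}) (at_left M)" by (rule G.cdf_at_left)
  have l2: "(cdf (Gs \<delta> M) \<longlongrightarrow> (1 - \<delta>) * Fc M) (at_left M)"
  proof -
    have "((\<lambda>x. (1 - \<delta>) * Fc x) \<longlongrightarrow> (1 - \<delta>) * Fc M) (at_left M)"
    proof -
      have "(Fc \<longlongrightarrow> Fc M) (at_left M)"
        using F_cont continuous_at_split unfolding continuous_within by blast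
      then show ?thesis by (intro tendsto_intros)
    qed
    moreover have "eventually (\<lambda>x. (1 - \<delta>) * Fc x = cdf (Gs \<delta> M) x) (at_left M)"
      unfolding eventually_at_left_field by (intro exI[of _ "M - 1"]) (auto simp: Gs_cdf[OF \<delta>])
    ultimately show ?thesis by (rule Lim_transform_eventually)
  qed
  have "measure (Gs \<delta> M) {..<M} = (1 - \<delta>) * Fc M"
    using tendsto_unique[OF _ l1 l2] by simp
  moreover have "measure (Gs \<delta> M) {..M} = measure (Gs \<delta> M) {..<M} + measure (Gs \<delta> M) {M}"
  proof -
    have "measure (Gs \<delta> M) {..M} = measure (Gs \<delta> M) ({..<M} \<union> {M})"
      by (intro arg_cong[where f="measure (Gs \<delta> M)"]) auto
    also have "\<dots> = measure (Gs \<delta> M) {..<M} + measure (Gs \<delta> M) {M}"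
      by (rule G.finite_measure_Union) auto
    finally show ?thesis .
  qed
  moreover have "measure (Gs \<delta> M) {..M} = (1 - \<delta>) * Fc M + \<delta>"
    using Gs_cdf[OF \<delta>, of M M] by (simp add: cdf_def)
  ultimately show ?thesis by simp
qed

lemma Lstar_lower:
  assumes \<delta>: "0 \<le> \<delta>" "\<delta> < pp"
  shows "ereal (Q ((1 + \<epsilon>) / (2 * (1 - \<delta>))) - Q ((1 - \<epsilon>) / (2 * (1 - \<delta>))))
           \<le> esssup (iid (Gs \<delta> (Q ((1 + \<epsilon>) / (2 * (1 - \<delta>))) + 1))) len"
proof -
  define c1 where "c1 = (1 + \<epsilon>) / (2 * (1 - \<delta>))"
  define c1w where "c1w = (1 - \<epsilon>) / (2 * (1 - \<delta>))"
  define M where "M = Q c1 + 1"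
  have d1: "1 - \<delta> > 0" using \<delta> pp_range by simp
  have \<delta>1: "0 \<le> \<delta>" "\<delta> \<le> 1" using \<delta> pp_range by auto
  have e1: "(1 - \<delta>) * c1 = 1 - pp" using d1 by (simp add: c1_def field_simps)
  have e2: "(1 - \<delta>) * c1w = pp" using d1 by (simp add: c1w_def field_simps)
  have c1r: "0 < c1" "c1 < 1"
  proof -
    have "0 < (1 - \<delta>) * c1" using e1 pp_range by simp
    then show "0 < c1" using d1 by (simp add: zero_less_mult_iff)
    have "(1 - \<delta>) * c1 < (1 - \<delta>) * 1" using e1 \<delta> by simp
    then show "c1 < 1" using d1 by simp
  qed
  have c1wr: "0 < c1w" "c1w < 1"
  proof -
    have "0 < (1 - \<delta>) * c1w" using e2 pp_range by simp
    then show "0 < c1w" using d1 by (simp add: zero_less_mult_iff)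
    have "pp < 1 - \<delta>" using \<delta> pp_range by argo
    then have "(1 - \<delta>) * c1w < (1 - \<delta>) * 1" using e2 by simp
    then show "c1w < 1" using d1 by simp
  qed
  define G where "G = Gs \<delta> M"
  have G: "real_distribution G" unfolding G_def by (rule Gs_props(1)[OF \<delta>1])
  interpret P: prob_space "iid G" by (rule iid_prob[OF G])
  have ge: "ereal (Q c1 - Q c1w - 2 * e) \<le> esssup (iid G) len" if e: "0 < e" "e < 1" for e
  proof -
    have "cdf G (Q c1 - e) = (1 - \<delta>) * Fc (Q c1 - e)"
      using e by (simp add: G_def Gs_cdf[OF \<delta>1] M_def)
    also have "\<dots> < (1 - \<delta>) * c1"
      using lt_Q[OF c1r, of "Q c1 - e"] e d1 by simp
    finally have A1: "AE \<omega> in iid G. eventually (\<lambda>n. ostat (sample \<omega> n) (n - k n) > Q c1 - e) sequentially"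
      using e1 by (intro b_gt[OF G]) simp
    have "c1w < Fc (Q c1w + e)" using Q_lt[OF c1wr, of "Q c1w + e"] e by simp
    then have "(1 - \<delta>) * c1w < (1 - \<delta>) * Fc (Q c1w + e)" using d1 by simp
    then have "pp < (1 - \<delta>) * Fc (Q c1w + e)" unfolding e2 .
    also have "\<dots> \<le> cdf G (Q c1w + e)"
      using \<delta> by (simp add: G_def Gs_cdf[OF \<delta>1])
    finally have A2: "AE \<omega> in iid G. eventually (\<lambda>n. ostat (sample \<omega> n) (k n + 1) \<le> Q c1w + e) sequentially"
      by (intro a_le[OF G])
    have "AE \<omega> in iid G. ereal (Q c1 - e - (Q c1w + e)) \<le> len \<omega>" by (rule len_ge[OF A1 A2])
    then have "ereal (Q c1 - e - (Q c1w + e)) \<le> esssup (iid G) len"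
      by (intro esssup_ge_AE[OF P.prob_space_axioms len_meas[OF G]])
    then show ?thesis by (simp add: algebra_simps)
  qed
  have "ereal (Q c1 - Q c1w) \<le> esssup (iid G) len"
  proof (rule ereal_le_epsilon2)
    fix r :: real assume r: "0 < r"
    define e where "e = min (r/2) (1/2)"
    have e: "0 < e" "e < 1" "2 * e \<le> r" using r by (auto simp: e_def)
    have "ereal (Q c1 - Q c1w) = ereal (Q c1 - Q c1w - 2 * e) + ereal (2 * e)" by simp
    also have "\<dots> \<le> esssup (iid G) len + ereal r"
      using ge[OF e(1,2)] e(3) by (intro add_mono) auto
    finally show "ereal (Q c1 - Q c1w) \<le> esssup (iid G) len + ereal r" .
  qed
  then show ?thesis by (simp add: G_def M_def c1_def c1w_def)
qed

lemma nonrobust_big: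
  assumes \<delta>: "pp < \<delta>" "\<delta> < 1/2"
  shows "\<exists>s0. \<forall>M. ereal (M - 1 - s0) \<le> esssup (iid (Gs \<delta> M)) len"
proof -
  have d1: "1 - \<delta> > 0" using \<delta> by simp
  have \<delta>1: "0 \<le> \<delta>" "\<delta> \<le> 1" using \<delta> pp_range by auto
  define r where "r = pp / (1 - \<delta>)"
  have er: "(1 - \<delta>) * r = pp" unfolding r_def by (rule mdc) (use d1 in simp)
  have rr: "0 < r" "r < 1"
  proof -
    show "0 < r" using pp_range d1 by (simp add: r_def)
    have "pp < 1 - \<delta>" using \<delta> pp_range by simp
    then show "r < 1" using d1 by (simp add: r_def)
  qed
  define s0 where "s0 = Q r + 1"
  have Fs0: "r < Fc s0" using Q_lt[OF rr, of s0] by (simp add: s0_def)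
  show ?thesis
  proof (intro exI allI)
    fix M
    define G where "G = Gs \<delta> M"
    have G: "real_distribution G" unfolding G_def by (rule Gs_props(1)[OF \<delta>1])
    interpret P: prob_space "iid G" by (rule iid_prob[OF G])
    have "cdf G (M - 1) = (1 - \<delta>) * Fc (M - 1)" by (simp add: G_def Gs_cdf[OF \<delta>1])
    also have "\<dots> \<le> (1 - \<delta>) * 1" using d1 Fc_le1 by (intro mult_left_mono) auto
    also have "\<dots> < 1 - pp" using \<delta> by simp
    finally have A1: "AE \<omega> in iid G. eventually (\<lambda>n. ostat (sample \<omega> n) (n - k n) > M - 1) sequentially"
      by (intro b_gt[OF G])
    have "pp < (1 - \<delta>) * Fc s0" using Fs0 d1 er by (metis mult_strict_left_mono)
    also have "\<dots> \<le> cdf G s0" using \<delta>1 by (simp add: G_def Gs_cdf[OF \<delta>1])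
    finally have A2: "AE \<omega> in iid G. eventually (\<lambda>n. ostat (sample \<omega> n) (k n + 1) \<le> s0) sequentially"
      by (intro a_le[OF G])
    have "AE \<omega> in iid G. ereal (M - 1 - s0) \<le> len \<omega>" by (rule len_ge[OF A1 A2])
    then show "ereal (M - 1 - s0) \<le> esssup (iid (Gs \<delta> M)) len"
      unfolding G_def[symmetric] by (intro esssup_ge_AE[OF P.prob_space_axioms len_meas[OF G]])
  qed
qed

end

context mainctx begin

interpretation RD: real_distribution F by (rule F_distr)

lemma card_split_le:
  "card {i\<in>{..<n}. (\<omega>::nat\<Rightarrow>real) i \<le> M - 1} + card {i\<in>{..<n}. \<omega> i \<in> {M}} \<le> n"
proof -
  have "card {i\<in>{..<n}. \<omega> i \<le> M - 1} + card {i\<in>{..<n}. \<omega> i \<in> {M}}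
      = card ({i\<in>{..<n}. \<omega> i \<le> M - 1} \<union> {i\<in>{..<n}. \<omega> i \<in> {M}})"
    by (rule card_Un_disjoint[symmetric]) auto
  also have "\<dots> \<le> card {..<n}" by (rule card_mono) auto
  finally show ?thesis by simp
qed

lemma nonrobust_boundary:
  assumes e0: "0 < \<epsilon>"
  shows "\<exists>s0. \<forall>M. ereal (M - 1 - s0) \<le> esssup (iid (Gs pp M)) len"
proof -
  have pp_lt: "pp < 1/2" using e0 by simp
  have \<delta>1: "0 \<le> pp" "pp \<le> 1" using pp_range by auto
  have d1: "1 - pp > 0" using pp_range by simp
  define r where "r = pp / (1 - pp)"
  have er: "(1 - pp) * r = pp" unfolding r_def by (rule mdc) (use d1 in simp)
  have rr: "0 < r" "r < 1"
  proof -
    show "0 < r" using pp_range d1 by (simp add: r_def)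
    have h: "pp < 1 - pp" using pp_lt by argo
    show "r < 1" unfolding r_def using divide_less_eq_1_pos[OF d1, of pp] h by blast
  qed
  define s0 where "s0 = Q r + 1"
  have Fs0: "r < Fc s0" using Q_lt[OF rr, of s0] by (simp add: s0_def)
  show ?thesis
  proof (intro exI allI)
    fix M
    define G where "G = Gs pp M"
    have G: "real_distribution G" unfolding G_def by (rule Gs_props(1)[OF \<delta>1])
    interpret P: prob_space "iid G" by (rule iid_prob[OF G])
    have atom: "measure G {M} = pp" unfolding G_def by (rule Gs_atom[OF \<delta>1])
    have "pp < (1 - pp) * Fc s0" using Fs0 d1 er by (metis mult_strict_left_mono)
    also have "\<dots> \<le> cdf G s0" using \<delta>1 by (simp add: G_def Gs_cdf[OF \<delta>1])
    finally have A2: "AE \<omega> in iid G. eventually (\<lambda>n. ostat (sample \<omega> n) (k n + 1) \<le> s0) sequentially"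
      by (intro a_le[OF G])
    define E where "E = (\<lambda>n. {\<omega>::nat\<Rightarrow>real. k n < card {i\<in>{..<n}. \<omega> i \<in> {M}}})"
    have Em: "E n \<in> sets (iid G)" for n
    proof -
      have m: "(\<lambda>\<omega>::nat\<Rightarrow>real. real (card {i\<in>{..<n}. \<omega> i \<in> {M}})) \<in> borel_measurable (iid G)"
        by (rule meas_iid[OF G card_le_meas]) simp
      have "E n = (\<lambda>\<omega>::nat\<Rightarrow>real. real (card {i\<in>{..<n}. \<omega> i \<in> {M}})) -` {real (k n)<..} \<inter> space (iid G)"
        by (auto simp: E_def space_iid[OF G])
      also have "\<dots> \<in> sets (iid G)" by (rule measurable_sets[OF m]) simp
      finally show ?thesis .
    qed
    have PE: "measure (iid G) (E n) \<ge> 1 - alpha_star n (k n) \<epsilon>" for n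
    proof -
      have "measure (iid G) (E n) = measure_pmf.prob (binomial_pmf n pp) {z. k n < z}"
        unfolding E_def using iid_binomial[OF G, of "{M}" "\<lambda>z. k n < z" n] atom by simp
      moreover have "measure_pmf.prob (binomial_pmf n pp) {z. k n < z \<and> z < n - k n} \<le> measure_pmf.prob (binomial_pmf n pp) {z. k n < z}"
        by (rule measure_pmf.finite_measure_mono) auto
      ultimately show ?thesis by (simp add: alpha_star_def)
    qed
    have Atend: "(\<lambda>n. alpha_star n (k n) \<epsilon>) \<longlonglongrightarrow> \<alpha>"
      using alpha_tendsto[of \<epsilon> \<alpha> k] \<epsilon>_range \<alpha>_range k_argmin by simp
    have lt: "\<alpha> < (1 + \<alpha>) / 2" using \<alpha>_range by simp
    have "eventually (\<lambda>n. alpha_star n (k n) \<epsilon> < (1 + \<alpha>) / 2) sequentially"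
      by (rule order_tendstoD(2)[OF Atend lt])
    then obtain N where N: "\<forall>n\<ge>N. alpha_star n (k n) \<epsilon> < (1 + \<alpha>) / 2"
      by (auto simp: eventually_sequentially)
    have PE2: "measure (iid G) (E n) \<ge> (1 - \<alpha>) / 2" if "n \<ge> N" for n
    proof -
      have "alpha_star n (k n) \<epsilon> < (1 + \<alpha>) / 2" using N that by blast
      then show ?thesis using PE[of n] by argo
    qed
    define U where "U = (\<lambda>m. \<Union>n\<in>{m..}. E n)"
    have Um: "U m \<in> sets (iid G)" for m unfolding U_def using Em by auto
    have Udec: "decseq U" unfolding U_def decseq_def by (auto intro: order_trans)
    have UB: "measure (iid G) (U m) \<ge> (1 - \<alpha>) / 2" for m
    proof -
      have "(1 - \<alpha>) / 2 \<le> measure (iid G) (E (max m N))" by (rule PE2) simp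
      also have "\<dots> \<le> measure (iid G) (U m)"
      proof -
        have sub: "E (max m N) \<subseteq> U m" unfolding U_def by (auto intro!: bexI[of _ "max m N"])
        show ?thesis by (rule P.finite_measure_mono[OF sub Um])
      qed
      finally show ?thesis .
    qed
    have "(\<lambda>m. measure (iid G) (U m)) \<longlonglongrightarrow> measure (iid G) (\<Inter>m. U m)"
      by (rule P.finite_Lim_measure_decseq) (use Um Udec in auto)
    then have Ilow: "measure (iid G) (\<Inter>m. U m) \<ge> (1 - \<alpha>) / 2"
      by (rule LIMSEQ_le_const) (use UB in auto)
    have Im: "(\<Inter>m. U m) \<in> sets (iid G)" using Um by auto
    have good: "AE \<omega> in iid G. \<omega> \<in> (\<Inter>m. U m) \<longrightarrow> ereal (M - 1 - s0) \<le> len \<omega>"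
      using A2
    proof eventually_elim
      case (elim \<omega>)
      show ?case
      proof
        assume w: "\<omega> \<in> (\<Inter>m. U m)"
        have fr: "frequently (\<lambda>n. \<omega> \<in> E n) sequentially"
          unfolding frequently_sequentially using w by (auto simp: U_def)
        have "frequently (\<lambda>n. \<omega> \<in> E n \<and> (ostat (sample \<omega> n) (k n + 1) \<le> s0 \<and> 1 \<le> n - k n \<and> n - k n \<le> n)) sequentially"
          by (rule frequently_eventually_frequently[OF fr eventually_conj[OF elim jb_rng]])
        then have "frequently (\<lambda>n. ereal (M - 1 - s0) \<le> ereal (ostat (sample \<omega> n) (n - k n) - ostat (sample \<omega> n) (k n + 1))) sequentially"
        proof (rule frequently_elim1)
          fix n assume h: "\<omega> \<in> E n \<and> ostat (sample \<omega> n) (k n + 1) \<le> s0 \<and> 1 \<le> n - k n \<and> n - k n \<le> n"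
          have "card {i\<in>{..<n}. \<omega> i \<le> M - 1} < n - k n"
            using card_split_le[of n \<omega> M] h by (auto simp: E_def)
          then have "\<not> ostat (sample \<omega> n) (n - k n) \<le> M - 1"
            using ostat_le_iff_card[of "n - k n" n \<omega> "M - 1"] h by simp
          then show "ereal (M - 1 - s0) \<le> ereal (ostat (sample \<omega> n) (n - k n) - ostat (sample \<omega> n) (k n + 1))"
            using h by simp
        qed
        then show "ereal (M - 1 - s0) \<le> len \<omega>" unfolding len_def by (rule limsup_ge_frequently)
      qed
    qed
    have "emeasure (iid G) {\<omega> \<in> space (iid G). ereal (M - 1 - s0) \<le> len \<omega>} > 0"
    proof (rule ccontr)
      assume "\<not> ?thesis"
      then have z: "emeasure (iid G) {\<omega> \<in> space (iid G). ereal (M - 1 - s0) \<le> len \<omega>} = 0" by simp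
      have lm: "len \<in> borel_measurable (iid G)" by (rule len_meas[OF G])
      have "AE \<omega> in iid G. \<not> ereal (M - 1 - s0) \<le> len \<omega>"
        by (subst AE_iff_measurable[OF _ refl]) (use z lm in auto)
      then have "AE \<omega> in iid G. \<omega> \<notin> (\<Inter>m. U m)" using good by eventually_elim auto
      then have "emeasure (iid G) (\<Inter>m. U m) = 0"
        by (subst (asm) AE_iff_measurable[OF Im]) (auto simp: space_iid[OF G])
      then have "measure (iid G) (\<Inter>m. U m) = 0" by (simp add: measure_def)
      then show False using Ilow \<alpha>_range by simp
    qed
    then show "ereal (M - 1 - s0) \<le> esssup (iid (Gs pp M)) len"
      unfolding G_def[symmetric] by (intro esssup_ge_pos[OF P.prob_space_axioms len_meas[OF G]])
  qed
qed

end

lemma measure_to_zero: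
  assumes P: "prob_space M" and Sm: "\<And>n. S n \<in> sets M"
    and ae: "AE \<omega> in M. eventually (\<lambda>n. \<omega> \<notin> S n) sequentially"
  shows "(\<lambda>n. measure M (S n)) \<longlonglongrightarrow> 0"
proof -
  interpret prob_space M by (rule P)
  define U where "U = (\<lambda>m. \<Union>n\<in>{m..}. S n)"
  have Um: "U m \<in> sets M" for m unfolding U_def using Sm by auto
  have Udec: "decseq U" unfolding U_def decseq_def by (auto intro: order_trans)
  have lim: "(\<lambda>m. measure M (U m)) \<longlonglongrightarrow> measure M (\<Inter>m. U m)"
    by (rule finite_Lim_measure_decseq) (use Um Udec in auto)
  have Im: "(\<Inter>m. U m) \<in> sets M" using Um by auto
  have "AE \<omega> in M. \<omega> \<notin> (\<Inter>m. U m)"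
    using ae
  proof eventually_elim
    case (elim \<omega>)
    then obtain N where "\<forall>n\<ge>N. \<omega> \<notin> S n" by (auto simp: eventually_sequentially)
    then show ?case by (auto simp: U_def)
  qed
  then have "emeasure M (\<Inter>m. U m) = 0"
    using sets.sets_into_space[OF Im] by (subst (asm) AE_iff_measurable[OF Im]) auto
  then have z: "measure M (\<Inter>m. U m) = 0" by (simp add: measure_def)
  have le: "measure M (S n) \<le> measure M (U n)" for n
  proof -
    have sub: "S n \<subseteq> U n" unfolding U_def by auto
    show ?thesis by (rule finite_measure_mono[OF sub Um])
  qed
  show ?thesis
  proof (rule tendsto_sandwich[OF _ _ tendsto_const])
    show "eventually (\<lambda>n. 0 \<le> measure M (S n)) sequentially" by simp
    show "eventually (\<lambda>n. measure M (S n) \<le> measure M (U n)) sequentially" using le by simp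
    show "(\<lambda>n. measure M (U n)) \<longlonglongrightarrow> 0" using lim z by simp
  qed
qed

lemma coverage_limit:
  fixes A B :: "nat \<Rightarrow> real list \<Rightarrow> real"
  assumes hyp: "\<forall>n\<ge>1. \<forall>G0. A1 G0 \<longrightarrow>
          (INF G\<in>contam G0 \<epsilon>. measure (iid G)
              {\<omega>. A n (sample \<omega> n) \<le> quantile (cdf G0) (1/2)
                   \<and> quantile (cdf G0) (1/2) < B n (sample \<omega> n)}) = 1 - \<alpha>"
    and G0: "A1 G0" and F: "F \<in> contam G0 \<epsilon>" and al: "\<alpha> < 1"
    and cA: "AE \<omega> in iid F. (\<lambda>n. A n (sample \<omega> n)) \<longlonglongrightarrow> A0"
    and cB: "AE \<omega> in iid F. (\<lambda>n. B n (sample \<omega> n)) \<longlonglongrightarrow> B0"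
  shows "B0 \<ge> quantile (cdf G0) (1/2) \<and> A0 \<le> quantile (cdf G0) (1/2)"
proof -
  define q where "q = quantile (cdf G0) (1/2)"
  define S where "S = (\<lambda>n. {\<omega>. A n (sample \<omega> n) \<le> q \<and> q < B n (sample \<omega> n)})"
  have Fd: "real_distribution F" using F by (simp add: contam_def)
  interpret P: prob_space "iid F" by (rule iid_prob[OF Fd])
  have low: "measure (iid F) (S n) \<ge> 1 - \<alpha>" if "n \<ge> 1" for n
  proof -
    have "(INF G\<in>contam G0 \<epsilon>. measure (iid G) (S n)) = 1 - \<alpha>"
      using hyp that G0 by (simp add: S_def q_def)
    moreover have "(INF G\<in>contam G0 \<epsilon>. measure (iid G) (S n)) \<le> measure (iid F) (S n)"
      by (rule cINF_lower[OF _ F]) (auto intro!: bdd_belowI[of _ 0])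
    ultimately show ?thesis by simp
  qed
  have Sm: "S n \<in> sets (iid F)" if "n \<ge> 1" for n
  proof (rule ccontr)
    assume "S n \<notin> sets (iid F)"
    then have "measure (iid F) (S n) = 0" by (simp add: measure_notin_sets)
    then show False using low[OF that] al by simp
  qed
  define S' where "S' = (\<lambda>n. S (Suc n))"
  have S'm: "S' n \<in> sets (iid F)" for n using Sm[of "Suc n"] by (simp add: S'_def)
  have nz: "\<not> (\<lambda>n. measure (iid F) (S' n)) \<longlonglongrightarrow> 0"
  proof
    assume "(\<lambda>n. measure (iid F) (S' n)) \<longlonglongrightarrow> 0"
    then have "eventually (\<lambda>n. measure (iid F) (S' n) < 1 - \<alpha>) sequentially"
      using al by (intro order_tendstoD(2)) auto
    then obtain n where "measure (iid F) (S' n) < 1 - \<alpha>" by (auto simp: eventually_sequentially)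
    then show False using low[of "Suc n"] by (simp add: S'_def)
  qed
  have B: "B0 \<ge> q"
  proof (rule ccontr)
    assume "\<not> B0 \<ge> q"
    then have lt: "B0 < q" by simp
    have "AE \<omega> in iid F. eventually (\<lambda>n. \<omega> \<notin> S' n) sequentially"
      using cB
    proof eventually_elim
      case (elim \<omega>)
      have "eventually (\<lambda>n. B n (sample \<omega> n) < q) sequentially" by (rule order_tendstoD(2)[OF elim lt])
      then have "eventually (\<lambda>n. B (Suc n) (sample \<omega> (Suc n)) < q) sequentially"
        by (rule eventually_sequentially_Suc[THEN iffD2])
      then show ?case by eventually_elim (auto simp: S'_def S_def)
    qed
    then show False using measure_to_zero[where S=S', OF P.prob_space_axioms S'm] nz by blast
  qed
  have A: "A0 \<le> q"
  proof (rule ccontr)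
    assume "\<not> A0 \<le> q"
    then have lt: "q < A0" by simp
    have "AE \<omega> in iid F. eventually (\<lambda>n. \<omega> \<notin> S' n) sequentially"
      using cA
    proof eventually_elim
      case (elim \<omega>)
      have "eventually (\<lambda>n. A n (sample \<omega> n) > q) sequentially" by (rule order_tendstoD(1)[OF elim lt])
      then have "eventually (\<lambda>n. A (Suc n) (sample \<omega> (Suc n)) > q) sequentially"
        by (rule eventually_sequentially_Suc[THEN iffD2])
      then show ?case by eventually_elim (auto simp: S'_def S_def)
    qed
    then show False using measure_to_zero[where S=S', OF P.prob_space_axioms S'm] nz by blast
  qed
  show ?thesis using A B by (simp add: q_def)
qed

lemma dist_cont:
  fixes g :: "real \<Rightarrow> real"
  assumes mono: "\<And>x y. x \<le> y \<Longrightarrow> g x \<le> g y"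
    and c: "\<And>x. isCont g x"
    and bot: "(g \<longlongrightarrow> 0) at_bot" and top: "(g \<longlongrightarrow> 1) at_top"
  shows "real_distribution (interval_measure g)" "cdf (interval_measure g) = g"
proof -
  have rc: "continuous (at_right a) g" for a using c continuous_at_split by blast
  show "real_distribution (interval_measure g)" by (rule mk_dist(1)[OF mono rc bot top])
  show "cdf (interval_measure g) = g" by (rule mk_dist(2)[OF mono rc bot top])
qed

lemma H1: "(c::real) > 0 \<Longrightarrow> (a / c = 1/2) = (a = c/2)" by (auto simp: field_simps)
lemma H2: "(c::real) > 0 \<Longrightarrow> (1/2 \<le> a / c) = (c/2 \<le> a)" by (auto simp: field_simps)

context mainctx begin

interpretation RD: real_distribution F by (rule F_distr)

lemma Fc_cont: "isCont Fc x" using F_cont by simp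

lemma A1_F_eps0: "A1 F"
proof -
  have h: "0 < (1/2::real)" "(1/2::real) < 1" by auto
  have "\<exists>!m. Fc m = 1/2"
  proof
    show "Fc (Q (1/2)) = 1/2" by (rule Fc_Q[OF h])
    show "m = Q (1/2)" if "Fc m = 1/2" for m using Q_unique[OF h that] by simp
  qed
  then show ?thesis unfolding A1_def using F_distr F_cont by auto
qed

lemma part4:
  fixes A B :: "nat \<Rightarrow> real list \<Rightarrow> real"
  assumes hyp: "\<forall>n\<ge>1. \<forall>G0. A1 G0 \<longrightarrow>
          (INF G\<in>contam G0 \<epsilon>. measure (iid G)
              {\<omega>. A n (sample \<omega> n) \<le> quantile (cdf G0) (1/2)
                   \<and> quantile (cdf G0) (1/2) < B n (sample \<omega> n)}) = 1 - \<alpha>"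
    and cA: "AE \<omega> in iid F. (\<lambda>n. A n (sample \<omega> n)) \<longlonglongrightarrow> A0"
    and cB: "AE \<omega> in iid F. (\<lambda>n. B n (sample \<omega> n)) \<longlonglongrightarrow> B0"
  shows "B0 \<ge> Q ((1 + \<epsilon>)/2) \<and> A0 \<le> Q ((1 - \<epsilon>)/2)"
proof (cases "\<epsilon> = 0")
  case True
  have "F \<in> contam F \<epsilon>" unfolding contam_def using F_distr True by auto
  then have "B0 \<ge> Q (1/2) \<and> A0 \<le> Q (1/2)"
    using coverage_limit[OF hyp A1_F_eps0 _ \<alpha>_range(2) cA cB] by simp
  then show ?thesis using True by simp
next
  case False
  then have e: "0 < \<epsilon>" "\<epsilon> < 1/2" using \<epsilon>_range by auto
  have e1: "0 < 1 - \<epsilon>" using e by simp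
  have Fcm: "x \<le> y \<Longrightarrow> Fc x \<le> Fc y" for x y by (rule Fc_mono)
  have F0: "(Fc \<longlongrightarrow> 0) at_bot" by (rule RD.cdf_lim_at_bot)
  have F1: "(Fc \<longlongrightarrow> 1) at_top" by (rule RD.cdf_lim_at_top_prob)
  define gB where "gB = (\<lambda>x. max 0 (Fc x - \<epsilon>) / (1 - \<epsilon>))"
  define hB where "hB = (\<lambda>x. min (Fc x) \<epsilon> / \<epsilon>)"
  have gBm: "gB x \<le> gB y" if "x \<le> y" for x y
    unfolding gB_def using e1 Fcm[OF that] by (intro divide_right_mono max.mono) auto
  have hBm: "hB x \<le> hB y" if "x \<le> y" for x y
    unfolding hB_def using e Fcm[OF that] by (intro divide_right_mono min.mono) auto
  have gBc: "isCont gB x" for x unfolding gB_def using e1 Fc_cont by (intro continuous_intros) auto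
  have hBc: "isCont hB x" for x unfolding hB_def using e Fc_cont by (intro continuous_intros) auto
  have gB0: "(gB \<longlongrightarrow> 0) at_bot"
  proof -
    have "(gB \<longlongrightarrow> max 0 (0 - \<epsilon>) / (1 - \<epsilon>)) at_bot" unfolding gB_def by (intro tendsto_intros F0) (use e1 in auto)
    then show ?thesis using e by simp
  qed
  have gB1: "(gB \<longlongrightarrow> 1) at_top"
  proof -
    have "(gB \<longlongrightarrow> max 0 (1 - \<epsilon>) / (1 - \<epsilon>)) at_top" unfolding gB_def by (intro tendsto_intros F1) (use e1 in auto)
    then show ?thesis using e1 by simp
  qed
  have hB0: "(hB \<longlongrightarrow> 0) at_bot"
  proof -
    have "(hB \<longlongrightarrow> min 0 \<epsilon> / \<epsilon>) at_bot" unfolding hB_def by (intro tendsto_intros F0) (use e in auto)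
    then show ?thesis using e by simp
  qed
  have hB1: "(hB \<longlongrightarrow> 1) at_top"
  proof -
    have "(hB \<longlongrightarrow> min 1 \<epsilon> / \<epsilon>) at_top" unfolding hB_def by (intro tendsto_intros F1) (use e in auto)
    then show ?thesis using e by simp
  qed
  define G0B where "G0B = interval_measure gB"
  define HB where "HB = interval_measure hB"
  have G0Bd: "real_distribution G0B" "cdf G0B = gB" unfolding G0B_def using dist_cont[OF gBm gBc gB0 gB1] by auto
  have HBd: "real_distribution HB" "cdf HB = hB" unfolding HB_def using dist_cont[OF hBm hBc hB0 hB1] by auto
  have qB: "0 < (1 + \<epsilon>)/2" "(1 + \<epsilon>)/2 < 1" using e by auto
  have gB_half: "gB x = 1/2 \<longleftrightarrow> Fc x = (1 + \<epsilon>)/2" for x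
  proof -
    have "gB x = 1/2 \<longleftrightarrow> max 0 (Fc x - \<epsilon>) = (1 - \<epsilon>)/2" unfolding gB_def by (rule H1[OF e1])
    also have "\<dots> \<longleftrightarrow> Fc x = (1 + \<epsilon>)/2"
    proof (cases "Fc x \<le> \<epsilon>")
      case True then show ?thesis using e1 by (simp add: max_def; argo)
    next
      case False then show ?thesis by (simp add: max_def; argo)
    qed
    finally show ?thesis .
  qed
  have gB_ge: "gB x \<ge> 1/2 \<longleftrightarrow> Fc x \<ge> (1 + \<epsilon>)/2" for x
  proof -
    have "gB x \<ge> 1/2 \<longleftrightarrow> max 0 (Fc x - \<epsilon>) \<ge> (1 - \<epsilon>)/2" unfolding gB_def by (rule H2[OF e1])
    also have "\<dots> \<longleftrightarrow> Fc x \<ge> (1 + \<epsilon>)/2"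
    proof (cases "Fc x \<le> \<epsilon>")
      case True then show ?thesis using e1 by (simp add: max_def; argo)
    next
      case False then show ?thesis by (simp add: max_def; argo)
    qed
    finally show ?thesis .
  qed
  have A1B: "A1 G0B"
  proof -
    have "\<exists>!m. gB m = 1/2"
    proof
      show "gB (Q ((1 + \<epsilon>)/2)) = 1/2" using gB_half Fc_Q[OF qB] by simp
      show "m = Q ((1 + \<epsilon>)/2)" if "gB m = 1/2" for m using Q_unique[OF qB] gB_half that by simp
    qed
    then show ?thesis unfolding A1_def using G0Bd gBc by simp
  qed
  have qtB: "quantile (cdf G0B) (1/2) = Q ((1 + \<epsilon>)/2)"
    unfolding quantile_def G0Bd(2) using gB_ge by simp
  have FB: "F \<in> contam G0B \<epsilon>"
  proof -
    have "Fc x = (1 - \<epsilon>) * gB x + \<epsilon> * hB x" for x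
      unfolding gB_def hB_def using e e1 by (cases "Fc x \<le> \<epsilon>") (auto simp: max_def min_def)
    then show ?thesis unfolding contam_def using F_distr HBd G0Bd by auto
  qed
  have Bres: "B0 \<ge> Q ((1 + \<epsilon>)/2)"
    using coverage_limit[OF hyp A1B FB \<alpha>_range(2) cA cB] qtB by simp
  define gA where "gA = (\<lambda>x. min (Fc x) (1 - \<epsilon>) / (1 - \<epsilon>))"
  define hA where "hA = (\<lambda>x. max 0 (Fc x - (1 - \<epsilon>)) / \<epsilon>)"
  have gAm: "gA x \<le> gA y" if "x \<le> y" for x y
    unfolding gA_def using e1 Fcm[OF that] by (intro divide_right_mono min.mono) auto
  have hAm: "hA x \<le> hA y" if "x \<le> y" for x y
    unfolding hA_def using e Fcm[OF that] by (intro divide_right_mono max.mono) auto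
  have gAc: "isCont gA x" for x unfolding gA_def using e1 Fc_cont by (intro continuous_intros) auto
  have hAc: "isCont hA x" for x unfolding hA_def using e Fc_cont by (intro continuous_intros) auto
  have gA0: "(gA \<longlongrightarrow> 0) at_bot"
  proof -
    have "(gA \<longlongrightarrow> min 0 (1 - \<epsilon>) / (1 - \<epsilon>)) at_bot" unfolding gA_def by (intro tendsto_intros F0) (use e1 in auto)
    then show ?thesis using e1 by simp
  qed
  have gA1: "(gA \<longlongrightarrow> 1) at_top"
  proof -
    have "(gA \<longlongrightarrow> min 1 (1 - \<epsilon>) / (1 - \<epsilon>)) at_top" unfolding gA_def by (intro tendsto_intros F1) (use e1 in auto)
    moreover have "min 1 (1 - \<epsilon>) = 1 - \<epsilon>" using e by simp
    ultimately show ?thesis using e1 by simp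
  qed
  have hA0: "(hA \<longlongrightarrow> 0) at_bot"
  proof -
    have "(hA \<longlongrightarrow> max 0 (0 - (1 - \<epsilon>)) / \<epsilon>) at_bot" unfolding hA_def by (intro tendsto_intros F0) (use e in auto)
    then show ?thesis using e1 by simp
  qed
  have hA1: "(hA \<longlongrightarrow> 1) at_top"
  proof -
    have "(hA \<longlongrightarrow> max 0 (1 - (1 - \<epsilon>)) / \<epsilon>) at_top" unfolding hA_def by (intro tendsto_intros F1) (use e in auto)
    then show ?thesis using e by simp
  qed
  define G0A where "G0A = interval_measure gA"
  define HA where "HA = interval_measure hA"
  have G0Ad: "real_distribution G0A" "cdf G0A = gA" unfolding G0A_def using dist_cont[OF gAm gAc gA0 gA1] by auto
  have HAd: "real_distribution HA" "cdf HA = hA" unfolding HA_def using dist_cont[OF hAm hAc hA0 hA1] by auto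
  have qA: "0 < (1 - \<epsilon>)/2" "(1 - \<epsilon>)/2 < 1" using e by auto
  have gA_half: "gA x = 1/2 \<longleftrightarrow> Fc x = (1 - \<epsilon>)/2" for x
  proof -
    have "gA x = 1/2 \<longleftrightarrow> min (Fc x) (1 - \<epsilon>) = (1 - \<epsilon>)/2" unfolding gA_def by (rule H1[OF e1])
    also have "\<dots> \<longleftrightarrow> Fc x = (1 - \<epsilon>)/2"
    proof (cases "Fc x \<le> 1 - \<epsilon>")
      case True then show ?thesis by (simp add: min_def)
    next
      case False then show ?thesis using e1 by (simp add: min_def; argo)
    qed
    finally show ?thesis .
  qed
  have gA_ge: "gA x \<ge> 1/2 \<longleftrightarrow> Fc x \<ge> (1 - \<epsilon>)/2" for x
  proof -
    have "gA x \<ge> 1/2 \<longleftrightarrow> min (Fc x) (1 - \<epsilon>) \<ge> (1 - \<epsilon>)/2" unfolding gA_def by (rule H2[OF e1])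
    also have "\<dots> \<longleftrightarrow> Fc x \<ge> (1 - \<epsilon>)/2"
    proof (cases "Fc x \<le> 1 - \<epsilon>")
      case True then show ?thesis by (simp add: min_def)
    next
      case False then show ?thesis using e1 by (simp add: min_def; argo)
    qed
    finally show ?thesis .
  qed
  have A1A: "A1 G0A"
  proof -
    have "\<exists>!m. gA m = 1/2"
    proof
      show "gA (Q ((1 - \<epsilon>)/2)) = 1/2" using gA_half Fc_Q[OF qA] by simp
      show "m = Q ((1 - \<epsilon>)/2)" if "gA m = 1/2" for m using Q_unique[OF qA] gA_half that by simp
    qed
    then show ?thesis unfolding A1_def using G0Ad gAc by simp
  qed
  have qtA: "quantile (cdf G0A) (1/2) = Q ((1 - \<epsilon>)/2)"
    unfolding quantile_def G0Ad(2) using gA_ge by simp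
  have FA: "F \<in> contam G0A \<epsilon>"
  proof -
    have "Fc x = (1 - \<epsilon>) * gA x + \<epsilon> * hA x" for x
      unfolding gA_def hA_def using e e1 by (cases "Fc x \<le> 1 - \<epsilon>") (auto simp: max_def min_def)
    then show ?thesis unfolding contam_def using F_distr HAd G0Ad by auto
  qed
  have Ares: "A0 \<le> Q ((1 - \<epsilon>)/2)"
    using coverage_limit[OF hyp A1A FA \<alpha>_range(2) cA cB] qtA by simp
  show ?thesis using Ares Bres by simp
qed

end

theorem theorem2:
  fixes F :: "real measure" and f :: "real \<Rightarrow> real" and \<theta> \<alpha> \<epsilon> :: real
    and k :: "nat \<Rightarrow> nat"
    and A B :: "nat \<Rightarrow> real list \<Rightarrow> real" and A0 B0 :: real
  assumes F_distr: "real_distribution F"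
    and F_cont: "\<forall>x. isCont (cdf F) x"
    and f_nonneg: "\<forall>x. 0 \<le> f x"
    and f_meas: "f \<in> borel_measurable borel"
    and F_density: "F = density lborel (\<lambda>x. ennreal (f x))"
    and f_symm: "\<forall>t. f (\<theta> + t) = f (\<theta> - t)"
    and f_unimodal: "mono_on {..\<theta>} f \<and> antimono_on {\<theta>..} f"
    and \<alpha>_range: "0 < \<alpha>" "\<alpha> < 1"
    and \<epsilon>_range: "0 \<le> \<epsilon>" "\<epsilon> < 1/2"
    and k_argmin: "\<forall>n\<ge>1. \<forall>j. \<bar>alpha_star n (k n) \<epsilon> - \<alpha>\<bar> \<le> \<bar>alpha_star n j \<epsilon> - \<alpha>\<bar>"
  defines "a \<equiv> (\<lambda>n xs. ostat xs (k n + 1))"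
    and "b \<equiv> (\<lambda>n xs. ostat xs (n - k n))"
  shows
    "(\<forall>\<delta>. 0 \<le> \<delta> \<and> \<delta> < (1 - \<epsilon>)/2 \<longrightarrow>
        max_asym_length a b F \<delta> =
          ereal (quantile (cdf F) ((1 + \<epsilon>) / (2 * (1 - \<delta>)))
               - quantile (cdf F) ((1 - \<epsilon>) / (2 * (1 - \<delta>)))))
   \<and> length_breakdown a b F = (1 - \<epsilon>)/2
   \<and> (robust_length a b F \<epsilon> \<longleftrightarrow> \<epsilon> < 1/3)
   \<and> ((\<forall>n\<ge>1. \<forall>G0. A1 G0 \<longrightarrow>
          (INF G\<in>contam G0 \<epsilon>. measure (iid G)
              {\<omega>. A n (sample \<omega> n) \<le> quantile (cdf G0) (1/2)
                   \<and> quantile (cdf G0) (1/2) < B n (sample \<omega> n)}) = 1 - \<alpha>)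
       \<and> (AE \<omega> in iid F. (\<lambda>n. A n (sample \<omega> n)) \<longlonglongrightarrow> A0)
       \<and> (AE \<omega> in iid F. (\<lambda>n. B n (sample \<omega> n)) \<longlonglongrightarrow> B0)
       \<longrightarrow> B0 \<ge> quantile (cdf F) ((1 + \<epsilon>)/2) \<and> A0 \<le> quantile (cdf F) ((1 - \<epsilon>)/2))"
proof -
  have loc: "mainctx F f \<theta> \<alpha> \<epsilon> k"
    unfolding mainctx_def symF_def mainctx_axioms_def
    using F_distr F_cont f_nonneg f_meas F_density f_symm f_unimodal \<alpha>_range \<epsilon>_range k_argmin
    by blast
  interpret mainctx F f \<theta> \<alpha> \<epsilon> k by (rule loc)
  interpret RD: real_distribution F by (rule F_distr)
  have lenE: "(\<lambda>\<omega>. limsup (\<lambda>n. ereal (b n (sample \<omega> n) - a n (sample \<omega> n)))) = len"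
    by (rule ext) (simp add: a_def b_def len_def)
  have MAL: "max_asym_length a b F \<delta> = (SUP G\<in>contam F \<delta>. esssup (iid G) len)" for \<delta>
    unfolding max_asym_length_def lenE ..
  have P1: "max_asym_length a b F \<delta> =
          ereal (quantile (cdf F) ((1 + \<epsilon>) / (2 * (1 - \<delta>))) - quantile (cdf F) ((1 - \<epsilon>) / (2 * (1 - \<delta>))))"
    if \<delta>: "0 \<le> \<delta>" "\<delta> < (1 - \<epsilon>)/2" for \<delta>
  proof -
    have \<delta>1: "0 \<le> \<delta>" "\<delta> \<le> 1" using \<delta> pp_range by auto
    show ?thesis unfolding MAL
    proof (rule antisym)
      show "(SUP G\<in>contam F \<delta>. esssup (iid G) len) \<le> ereal (Q ((1 + \<epsilon>) / (2 * (1 - \<delta>))) - Q ((1 - \<epsilon>) / (2 * (1 - \<delta>))))"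
      proof (rule SUP_least)
        fix G assume "G \<in> contam F \<delta>"
        then obtain H where G: "real_distribution G" and H: "real_distribution H"
          and GH: "\<forall>x. cdf G x = (1 - \<delta>) * Fc x + \<delta> * cdf H x"
          unfolding contam_def by auto
        show "esssup (iid G) len \<le> ereal (Q ((1 + \<epsilon>) / (2 * (1 - \<delta>))) - Q ((1 - \<epsilon>) / (2 * (1 - \<delta>))))"
          by (rule esssup_I[OF len_meas[OF G] Lstar_bound[OF \<delta> G H GH]])
      qed
      show "ereal (Q ((1 + \<epsilon>) / (2 * (1 - \<delta>))) - Q ((1 - \<epsilon>) / (2 * (1 - \<delta>)))) \<le> (SUP G\<in>contam F \<delta>. esssup (iid G) len)"
        using Lstar_lower[OF \<delta>] Gs_contam[OF \<delta>1] by (meson SUP_upper order_trans)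
    qed
  qed
  have inf_lemma: "X = \<infinity>" if "\<forall>M. ereal (M - c) \<le> X" for X :: ereal and c :: real
  proof (cases X)
    case (real r)
    then have "ereal (r + c + 1 - c) \<le> ereal r" using that by blast
    then show ?thesis by simp
  next
    case MInf
    then show ?thesis using that by auto
  qed simp
  have NR: "\<not> robust_length a b F \<delta>" if \<delta>: "(1 - \<epsilon>)/2 < \<delta>" "\<delta> < 1/2" for \<delta>
  proof -
    obtain s0 where s0: "\<forall>M. ereal (M - 1 - s0) \<le> esssup (iid (Gs \<delta> M)) len"
      using nonrobust_big[OF \<delta>] by blast
    have \<delta>1: "0 \<le> \<delta>" "\<delta> \<le> 1" using \<delta> pp_range by auto
    have "\<forall>M. ereal (M - (1 + s0)) \<le> max_asym_length a b F \<delta>"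
    proof
      fix M
      have "ereal (M - (1 + s0)) \<le> esssup (iid (Gs \<delta> M)) len" using s0 by (simp add: algebra_simps)
      also have "\<dots> \<le> max_asym_length a b F \<delta>" unfolding MAL by (rule SUP_upper[OF Gs_contam[OF \<delta>1]])
      finally show "ereal (M - (1 + s0)) \<le> max_asym_length a b F \<delta>" .
    qed
    then have "max_asym_length a b F \<delta> = \<infinity>" by (rule inf_lemma)
    then show ?thesis by (simp add: robust_length_def)
  qed
  have R: "robust_length a b F \<delta>" if \<delta>: "0 \<le> \<delta>" "\<delta> < (1 - \<epsilon>)/2" for \<delta>
    using P1[OF \<delta>] by (simp add: robust_length_def)
  have P2: "length_breakdown a b F = (1 - \<epsilon>)/2"
  proof -
    define S where "S = {\<delta>. 0 \<le> \<delta> \<and> \<delta> < 1/2 \<and> robust_length a b F \<delta>}"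
    have ppl: "0 < (1 - \<epsilon>)/2" "(1 - \<epsilon>)/2 \<le> 1/2" using pp_range by auto
    have S0: "0 \<in> S" using R[of 0] ppl by (simp add: S_def)
    have Sne: "S \<noteq> {}" using S0 by auto
    have Sle: "x \<le> (1 - \<epsilon>)/2" if "x \<in> S" for x
    proof (rule ccontr)
      assume "\<not> x \<le> (1 - \<epsilon>)/2"
      then show False using NR[of x] that by (auto simp: S_def)
    qed
    have Sbdd: "bdd_above S" by (rule bdd_aboveI[of _ "(1 - \<epsilon>)/2"]) (rule Sle)
    have "Sup S \<le> (1 - \<epsilon>)/2" by (rule cSup_least[OF Sne]) (use Sle in auto)
    moreover have "(1 - \<epsilon>)/2 \<le> Sup S"
    proof (subst le_cSup_iff[OF Sne Sbdd], intro allI impI)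
      fix y assume y: "y < (1 - \<epsilon>)/2"
      define m where "m = (y + (1 - \<epsilon>)/2) / 2"
      have m1: "m < (1 - \<epsilon>)/2" using y unfolding m_def by argo
      have m2: "y < m" using y unfolding m_def by argo
      define x where "x = max 0 m"
      have x: "0 \<le> x" "x < (1 - \<epsilon>)/2" "y < x"
        using m1 m2 ppl unfolding x_def by (auto simp: max_less_iff_conj less_max_iff_disj)
      have "x \<in> S" using R[OF x(1,2)] x ppl by (simp add: S_def)
      then show "\<exists>x\<in>S. y < x" using x by blast
    qed
    ultimately show ?thesis unfolding length_breakdown_def S_def[symmetric] by simp
  qed
  have P3: "robust_length a b F \<epsilon> \<longleftrightarrow> \<epsilon> < 1/3"
  proof (cases "\<epsilon> < 1/3")
    case True
    then have "\<epsilon> < (1 - \<epsilon>)/2" by argo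
    then show ?thesis using R[of \<epsilon>] \<epsilon>_range True by simp
  next
    case False
    show ?thesis
    proof (cases "\<epsilon> = 1/3")
      case False': True
      have e0: "0 < \<epsilon>" using False' by simp
      have epp: "\<epsilon> = (1 - \<epsilon>)/2" using False' by simp
      obtain s0 where s0: "\<forall>M. ereal (M - 1 - s0) \<le> esssup (iid (Gs ((1 - \<epsilon>)/2) M)) len"
        using nonrobust_boundary[OF e0] by blast
      have \<delta>1: "0 \<le> (1 - \<epsilon>)/2" "(1 - \<epsilon>)/2 \<le> 1" using pp_range by auto
      have "\<forall>M. ereal (M - (1 + s0)) \<le> max_asym_length a b F ((1 - \<epsilon>)/2)"
      proof
        fix M
        have "ereal (M - (1 + s0)) \<le> esssup (iid (Gs ((1 - \<epsilon>)/2) M)) len" using s0 by (simp add: algebra_simps)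
        also have "\<dots> \<le> max_asym_length a b F ((1 - \<epsilon>)/2)" unfolding MAL by (rule SUP_upper[OF Gs_contam[OF \<delta>1]])
        finally show "ereal (M - (1 + s0)) \<le> max_asym_length a b F ((1 - \<epsilon>)/2)" .
      qed
      then have "max_asym_length a b F ((1 - \<epsilon>)/2) = \<infinity>" by (rule inf_lemma)
      then have "\<not> robust_length a b F \<epsilon>" using epp by (simp add: robust_length_def)
      then show ?thesis using False by simp
    next
      case False': False
      then have "(1 - \<epsilon>)/2 < \<epsilon>" using False by argo
      then show ?thesis using NR[of \<epsilon>] \<epsilon>_range False by simp
    qed
  qed
  have P4: "((\<forall>n\<ge>1. \<forall>G0. A1 G0 \<longrightarrow>
          (INF G\<in>contam G0 \<epsilon>. measure (iid G)
              {\<omega>. A n (sample \<omega> n) \<le> quantile (cdf G0) (1/2)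
                   \<and> quantile (cdf G0) (1/2) < B n (sample \<omega> n)}) = 1 - \<alpha>)
       \<and> (AE \<omega> in iid F. (\<lambda>n. A n (sample \<omega> n)) \<longlonglongrightarrow> A0)
       \<and> (AE \<omega> in iid F. (\<lambda>n. B n (sample \<omega> n)) \<longlonglongrightarrow> B0)
       \<longrightarrow> B0 \<ge> quantile (cdf F) ((1 + \<epsilon>)/2) \<and> A0 \<le> quantile (cdf F) ((1 - \<epsilon>)/2))"
    using part4 by blast
  show ?thesis using P1 P2 P3 P4 by blast
qed

end
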